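(* Let $\mathcal H$ be a $d$-dimensional Hilbert space with orthonormal basis $\lvert1\rangle,\dots,\lvert d\rangle$, set $\widetilde E_{d(n-1)+m}=\lvert n\rangle\langle m\rvert$ for $n,m\in\{1,\dots,d\}$, and let $\mathcal E:\mathcal L(\mathcal H)\to\mathcal L(\mathcal H)$ be a quantum channel with $\mathcal E(\rho)=\sum_{i,j}\widetilde E_i\rho\widetilde E_j^\dagger\chi_{ij}$. Let $\mathcal H^\dagger$ be a Hilbert space with orthonormal basis $\{\lvert j\rangle:j\in\{1,\dots,d^2\}\}$, and define $\chi=\sum_{j,k}\chi_{jk}\lvert j\rangle\langle k\rvert$ and, for $\rho\in\mathcal L(\mathcal H)$, $\widetilde\rho=\sum_{j,k}\operatorname{tr}(\widetilde E_j\rho\widetilde E_k^\dagger)\lvert j\rangle\langle k\rvert$. Then, up to a unitary transformation on $\mathcal H^\dagger$, the complementary channel $\mathcal E^\dagger:\mathcal L(\mathcal H)\to\mathcal L(\mathcal H^\dagger)$ is given by $$\mathcal E^\dagger(\rho)=\sqrt{\chi}^{\,*}\,\widetilde\rho\,\sqrt{\chi}^{\,*}.$$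
   Context: The complementary channel of $\mathcal E$ is $\rho\mapsto\operatorname{tr}_B(U\rho U^\dagger)$ where $U$ is an isometric extension of $\mathcal E$ (output space $B$, environment $\mathcal H^\dagger$); it is defined up to a unitary on the environment. $\sqrt\chi$ is the positive semidefinite square root of the (positive semidefinite) matrix $\chi$, and $^*$ denotes entrywise complex conjugation in the basis $\{\lvert j\rangle\}$. *)

theory Defs
  imports "Jordan_Normal_Form.Matrix"
begin

definition mtrace :: "complex mat \<Rightarrow> complex" where
  "mtrace A = (\<Sum>i<dim_row A. A $$ (i,i))"

definition adj :: "complex mat \<Rightarrow> complex mat" where
  "adj A = mat (dim_col A) (dim_row A) (\<lambda>(i,j). cnj (A $$ (j,i)))"

definition conj_mat :: "complex mat \<Rightarrow> complex mat" where
  "conj_mat A = map_mat cnj A"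

definition psd :: "nat \<Rightarrow> complex mat \<Rightarrow> bool" where
  "psd n A \<longleftrightarrow> A \<in> carrier_mat n n \<and> adj A = A \<and>
     (\<forall>v \<in> carrier_vec n. 0 \<le> Re (\<Sum>i<n. cnj (v $ i) * (A *\<^sub>v v) $ i))"

definition psd_sqrt :: "nat \<Rightarrow> complex mat \<Rightarrow> complex mat" where
  "psd_sqrt n A = (THE B. psd n B \<and> B * B = A)"

definition unitary_mat :: "nat \<Rightarrow> complex mat \<Rightarrow> bool" where
  "unitary_mat n W \<longleftrightarrow> W \<in> carrier_mat n n \<and> adj W * W = 1\<^sub>m n"

(* Complete positivity: id_k (x) Phi preserves positivity for all k, where a (k*n)x(k*n)
   matrix is read as a k x k block matrix of n x n blocks (ordering C^k (x) C^n). *)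

definition blk :: "nat \<Rightarrow> complex mat \<Rightarrow> nat \<Rightarrow> nat \<Rightarrow> complex mat" where
  "blk n X a b = mat n n (\<lambda>(i,j). X $$ (a*n+i, b*n+j))"

definition ampl :: "nat \<Rightarrow> nat \<Rightarrow> nat \<Rightarrow> (complex mat \<Rightarrow> complex mat) \<Rightarrow> complex mat \<Rightarrow> complex mat" where
  "ampl k n m \<Phi> X = mat (k*m) (k*m) (\<lambda>(r,c). \<Phi> (blk n X (r div m) (c div m)) $$ (r mod m, c mod m))"

definition quantum_channel :: "nat \<Rightarrow> nat \<Rightarrow> (complex mat \<Rightarrow> complex mat) \<Rightarrow> bool" where
  "quantum_channel n m \<Phi> \<longleftrightarrow>
     (\<forall>A \<in> carrier_mat n n. \<Phi> A \<in> carrier_mat m m) \<and>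
     (\<forall>A \<in> carrier_mat n n. \<forall>B \<in> carrier_mat n n. \<Phi> (A + B) = \<Phi> A + \<Phi> B) \<and>
     (\<forall>A \<in> carrier_mat n n. \<forall>c. \<Phi> (c \<cdot>\<^sub>m A) = c \<cdot>\<^sub>m \<Phi> A) \<and>
     (\<forall>A \<in> carrier_mat n n. mtrace (\<Phi> A) = mtrace A) \<and>
     (\<forall>k. \<forall>X. psd (k*n) X \<longrightarrow> psd (k*m) (ampl k n m \<Phi> X))"

(* Partial traces on C^dB (x) C^dE, basis |b>|e> has index b*dE + e. *)
definition ptrace_env :: "nat \<Rightarrow> nat \<Rightarrow> complex mat \<Rightarrow> complex mat" where
  "ptrace_env dB dE X = mat dB dB (\<lambda>(b,b'). \<Sum>e<dE. X $$ (b*dE+e, b'*dE+e))"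

definition ptrace_out :: "nat \<Rightarrow> nat \<Rightarrow> complex mat \<Rightarrow> complex mat" where
  "ptrace_out dB dE X = mat dE dE (\<lambda>(e,e'). \<Sum>b<dB. X $$ (b*dE+e, b*dE+e'))"

definition isometric_extension :: "nat \<Rightarrow> nat \<Rightarrow> nat \<Rightarrow> (complex mat \<Rightarrow> complex mat) \<Rightarrow> complex mat \<Rightarrow> bool" where
  "isometric_extension dA dB dE \<Phi> U \<longleftrightarrow>
     U \<in> carrier_mat (dB*dE) dA \<and> adj U * U = 1\<^sub>m dA \<and>
     (\<forall>\<rho> \<in> carrier_mat dA dA. \<Phi> \<rho> = ptrace_env dB dE (U * \<rho> * adj U))"

(* E~_i = |i div d><i mod d|, i < d^2 (0-based version of E~_{d(n-1)+m} = |n><m|) *)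
definition Et :: "nat \<Rightarrow> nat \<Rightarrow> complex mat" where
  "Et d i = mat d d (\<lambda>(r,c). if r = i div d \<and> c = i mod d then 1 else 0)"

definition chi_channel :: "nat \<Rightarrow> complex mat \<Rightarrow> complex mat \<Rightarrow> complex mat" where
  "chi_channel d \<chi> \<rho> = mat d d (\<lambda>(r,c).
     \<Sum>i<d^2. \<Sum>j<d^2. (Et d i * \<rho> * adj (Et d j)) $$ (r,c) * \<chi> $$ (i,j))"

definition rho_tilde :: "nat \<Rightarrow> complex mat \<Rightarrow> complex mat" where
  "rho_tilde d \<rho> = mat (d^2) (d^2) (\<lambda>(j,k). mtrace (Et d j * \<rho> * adj (Et d k)))"

end

theory Submission imports Defs "Jordan_Normal_Form.Determinant" "Jordan_Normal_Form.Char_Poly" "HOL-Computational_Algebra.Fundamental_Theorem_Algebra"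
begin

lemma adj_dim[simp]: "dim_row (adj A) = dim_col A" "dim_col (adj A) = dim_row A"
  by (auto simp: adj_def)

lemma adj_index[simp]: "i < dim_col A \<Longrightarrow> j < dim_row A \<Longrightarrow> adj A $$ (i,j) = cnj (A $$ (j,i))"
  unfolding adj_def by simp

lemma adj_carrier[simp]: "A \<in> carrier_mat n m \<Longrightarrow> adj A \<in> carrier_mat m n"
  unfolding carrier_mat_def by simp

lemma adj_adj[simp]: "adj (adj A) = A"
  by (rule eq_matI) simp_all

lemma adj_mult: assumes "dim_col A = dim_row B" shows "adj (A * B) = adj B * adj A"
proof (rule eq_matI)
  fix i j assume i: "i < dim_row (adj B * adj A)" and j: "j < dim_col (adj B * adj A)"
  show "adj (A * B) $$ (i, j) = (adj B * adj A) $$ (i, j)"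
    using i j assms by (simp add: scalar_prod_def mult.commute)
qed auto

lemma adj_one[simp]: "adj (1\<^sub>m n) = 1\<^sub>m n"
  by (rule eq_matI) simp_all

lemma adj_add: assumes "A \<in> carrier_mat n m" "B \<in> carrier_mat n m" shows "adj (A + B) = adj A + adj B"
  by (rule eq_matI) (use assms in simp_all)

lemma adj_smult: "adj (c \<cdot>\<^sub>m A) = cnj c \<cdot>\<^sub>m adj A"
  by (rule eq_matI) simp_all

lemma unitary_right: assumes "unitary_mat n W" shows "W * adj W = 1\<^sub>m n"
  using assms mat_mult_left_right_inverse[of "adj W" n W] unfolding unitary_mat_def by auto

lemma unitary_mult: assumes "unitary_mat n V" "unitary_mat n W" shows "unitary_mat n (V * W)"
proof -
  have V: "V \<in> carrier_mat n n" and W: "W \<in> carrier_mat n n" using assms unfolding unitary_mat_def by auto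
  have "adj (V * W) * (V * W) = (adj W * adj V) * (V * W)"
    using V W by (simp add: adj_mult)
  also have "\<dots> = adj W * (adj V * V) * W"
  proof -
    have aV: "adj V \<in> carrier_mat n n" and aW: "adj W \<in> carrier_mat n n" using V W by auto
    have "(adj W * adj V) * (V * W) = adj W * (adj V * (V * W))"
      by (rule assoc_mult_mat[OF aW aV], use V W in auto)
    also have "adj V * (V * W) = (adj V * V) * W"
      by (rule assoc_mult_mat[OF aV V W, symmetric])
    finally show ?thesis by (rule trans, intro assoc_mult_mat[OF aW _ W, symmetric], use aV V in auto)
  qed
  also have "\<dots> = 1\<^sub>m n" using assms W unfolding unitary_mat_def
    by (simp add: right_mult_one_mat[OF W] left_mult_one_mat[OF W])
  finally show ?thesis using V W unfolding unitary_mat_def by auto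
qed

lemma unitary_adj: assumes "unitary_mat n W" shows "unitary_mat n (adj W)"
  using unitary_right[OF assms] assms unfolding unitary_mat_def by auto


definition ip :: "nat \<Rightarrow> (nat \<Rightarrow> complex) \<Rightarrow> (nat \<Rightarrow> complex) \<Rightarrow> complex" where
  "ip n u v = (\<Sum>r<n. cnj (u r) * v r)"

definition orthon :: "nat \<Rightarrow> nat set \<Rightarrow> (nat \<Rightarrow> nat \<Rightarrow> complex) \<Rightarrow> bool" where
  "orthon n I f \<longleftrightarrow> (\<forall>i\<in>I. \<forall>j\<in>I. ip n (f i) (f j) = (if i = j then 1 else 0))"

lemma ip_self: "ip n u u = complex_of_real (\<Sum>r<n. (cmod (u r))\<^sup>2)"
  unfolding ip_def of_real_sum by (intro sum.cong refl) (metis complex_norm_square mult.commute)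

lemma ip_self_pos: fixes u :: "nat \<Rightarrow> complex" assumes "r < n" "u r \<noteq> 0" shows "(\<Sum>r<n. (cmod (u r))\<^sup>2) > 0"
proof -
  have "(\<Sum>r<n. (cmod (u r))\<^sup>2) \<ge> (cmod (u r))\<^sup>2"
    using assms by (intro member_le_sum) simp_all
  moreover have "(cmod (u r))\<^sup>2 > 0" using assms by simp
  ultimately show ?thesis by linarith
qed

lemma normalize_vec: fixes u :: "nat \<Rightarrow> complex" assumes "r < n" "u r \<noteq> 0"
  shows "\<exists>c. c \<noteq> 0 \<and> ip n (\<lambda>k. c * u k) (\<lambda>k. c * u k) = 1"
proof -
  define s where "s = (\<Sum>r<n. (cmod (u r))\<^sup>2)"
  have s: "s > 0" using ip_self_pos[of r n u, OF assms] s_def by simp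
  define c where "c = complex_of_real (1 / sqrt s)"
  have "ip n (\<lambda>k. c * u k) (\<lambda>k. c * u k) = cnj c * c * ip n u u"
    unfolding ip_def by (simp add: sum_distrib_left algebra_simps)
  also have "\<dots> = complex_of_real ((1 / sqrt s) * (1 / sqrt s) * s)"
    unfolding ip_self c_def s_def[symmetric] by (simp only: complex_cnj_complex_of_real of_real_mult)
  also have "(1 / sqrt s) * (1 / sqrt s) * s = 1"
  proof -
    have "sqrt s * sqrt s = s" using s by simp
    thus ?thesis using s by (simp add: field_simps)
  qed
  finally show ?thesis using s c_def by (intro exI[of _ c]) auto
qed

lemma exists_orth:
  assumes fin: "finite I" and card: "card I < n" and on: "orthon n I f"
  shows "\<exists>v. ip n v v = 1 \<and> (\<forall>i\<in>I. ip n (f i) v = 0)"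
proof -
  define w where "w k r = (if r = k then 1 else 0) - (\<Sum>i\<in>I. f i r * cnj (f i k))" for k r
  have ex: "\<exists>k<n. \<exists>r<n. w k r \<noteq> 0"
  proof (rule ccontr)
    assume "\<not> ?thesis"
    hence z: "\<And>k. k < n \<Longrightarrow> w k k = 0" by auto
    have "(\<Sum>k<n. w k k) = 0" using z by simp
    moreover have "(\<Sum>k<n. w k k) = of_nat n - (\<Sum>k<n. \<Sum>i\<in>I. f i k * cnj (f i k))"
      unfolding w_def by (simp add: sum_subtractf)
    moreover have "(\<Sum>k<n. \<Sum>i\<in>I. f i k * cnj (f i k)) = (\<Sum>i\<in>I. ip n (f i) (f i))"
      unfolding ip_def by (subst sum.swap) (simp add: mult.commute)
    moreover have "(\<Sum>i\<in>I. ip n (f i) (f i)) = of_nat (card I)"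
      using on unfolding orthon_def by simp
    ultimately have "(of_nat n :: complex) = of_nat (card I)" by simp
    hence "n = card I" using of_nat_eq_iff by blast
    thus False using card by simp
  qed
  then obtain k r where k: "k < n" and r: "r < n" and wr: "w k r \<noteq> 0" by blast
  have orth: "ip n (f j) (w k) = 0" if j: "j \<in> I" for j
  proof -
    have "ip n (f j) (w k) = (\<Sum>r<n. cnj (f j r) * (if r = k then 1 else 0))
        - (\<Sum>r<n. \<Sum>i\<in>I. cnj (f j r) * f i r * cnj (f i k))"
      unfolding ip_def w_def by (simp add: right_diff_distrib sum_subtractf sum_distrib_left mult.assoc)
    also have "(\<Sum>r<n. cnj (f j r) * (if r = k then 1 else 0)) = cnj (f j k)"
      using k by (simp add: if_distrib cong: if_cong)
    also have "(\<Sum>r<n. \<Sum>i\<in>I. cnj (f j r) * f i r * cnj (f i k)) = (\<Sum>i\<in>I. ip n (f j) (f i) * cnj (f i k))"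
      unfolding ip_def by (subst sum.swap) (simp add: sum_distrib_right)
    also have "\<dots> = (\<Sum>i\<in>I. if i = j then cnj (f i k) else 0)"
      using on j unfolding orthon_def by (intro sum.cong) auto
    also have "\<dots> = cnj (f j k)" using fin j by simp
    finally show ?thesis by simp
  qed
  obtain c where c: "c \<noteq> 0" "ip n (\<lambda>q. c * w k q) (\<lambda>q. c * w k q) = 1"
    using normalize_vec[of r n "w k", OF r wr] by blast
  have "ip n (f j) (\<lambda>q. c * w k q) = 0" if "j \<in> I" for j
    using orth[OF that] unfolding ip_def by (simp add: sum_distrib_left[symmetric] mult.left_commute)
  thus ?thesis using c by blast
qed

lemma complete_orthon:
  assumes "I \<subseteq> {..<n}" "orthon n I f"
  shows "\<exists>g. (\<forall>i\<in>I. g i = f i) \<and> orthon n {..<n} g"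
  using assms
proof (induction "card ({..<n} - I)" arbitrary: I f)
  case 0
  hence "I = {..<n}" by auto
  thus ?case using 0 by blast
next
  case (Suc x)
  have "{..<n} - I \<noteq> {}" using Suc.hyps(2) by (metis card.empty nat.distinct(1))
  then obtain j where j: "j \<in> {..<n} - I" by blast
  have fin: "finite I" using Suc.prems finite_subset by blast
  have "card I < card {..<n}" using Suc.prems j by (intro psubset_card_mono) auto
  hence cI: "card I < n" by simp
  obtain v where v: "ip n v v = 1" "\<forall>i\<in>I. ip n (f i) v = 0" using exists_orth[OF fin cI Suc.prems(2)] by blast
  define f' where "f' = f(j := v)"
  have ipc: "ip n v u = cnj (ip n u v)" for u unfolding ip_def by (simp add: mult.commute)
  have on': "orthon n (insert j I) f'"
    unfolding orthon_def
  proof (intro ballI)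
    fix a b assume a: "a \<in> insert j I" and b: "b \<in> insert j I"
    show "ip n (f' a) (f' b) = (if a = b then 1 else 0)"
    proof (cases "a = j")
      case True
      show ?thesis
      proof (cases "b = j")
        case True thus ?thesis using \<open>a = j\<close> v unfolding f'_def by simp
      next
        case False
        hence "b \<in> I" using b by simp
        hence "ip n v (f b) = 0" using v(2) ipc[of "f b"] by simp
        thus ?thesis using \<open>a = j\<close> False unfolding f'_def by simp
      qed
    next
      case False
      hence aI: "a \<in> I" using a by simp
      show ?thesis
      proof (cases "b = j")
        case True thus ?thesis using False aI v(2) unfolding f'_def by simp
      next
        case False
        hence "b \<in> I" using b by simp
        thus ?thesis using aI \<open>a \<noteq> j\<close> False Suc.prems(2) unfolding f'_def orthon_def by simp
      qed
    qed
  qed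
  have "x = card ({..<n} - insert j I)" using Suc.hyps(2) j
    by (metis Diff_insert card_Diff_singleton diff_Suc_1 finite_Diff finite_lessThan)
  then obtain g where g: "\<forall>i\<in>insert j I. g i = f' i" "orthon n {..<n} g"
    using Suc.hyps(1)[of "insert j I" f'] on' Suc.prems(1) j by auto
  have "\<forall>i\<in>I. g i = f i" using g(1) j unfolding f'_def by auto
  thus ?case using g(2) by blast
qed

definition fam_mat :: "nat \<Rightarrow> (nat \<Rightarrow> nat \<Rightarrow> complex) \<Rightarrow> complex mat" where
  "fam_mat n g = mat n n (\<lambda>(r,c). g c r)"

lemma fam_mat_unitary: assumes "orthon n {..<n} g" shows "unitary_mat n (fam_mat n g)"
proof -
  have "adj (fam_mat n g) * fam_mat n g = 1\<^sub>m n"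
  proof (rule eq_matI)
    fix i j assume ij: "i < dim_row (1\<^sub>m n :: complex mat)" "j < dim_col (1\<^sub>m n :: complex mat)"
    hence "(adj (fam_mat n g) * fam_mat n g) $$ (i,j) = ip n (g i) (g j)"
      unfolding fam_mat_def ip_def by (simp add: scalar_prod_def atLeast0LessThan)
    also have "\<dots> = 1\<^sub>m n $$ (i,j)" using assms ij unfolding orthon_def by simp
    finally show "(adj (fam_mat n g) * fam_mat n g) $$ (i,j) = 1\<^sub>m n $$ (i,j)" .
  qed (simp_all add: fam_mat_def)
  thus ?thesis unfolding unitary_mat_def fam_mat_def by simp
qed

lemma unitary_orthon: assumes "unitary_mat n W" shows "orthon n {..<n} (\<lambda>c r. W $$ (r,c))"
proof -
  have W: "W \<in> carrier_mat n n" and e: "adj W * W = 1\<^sub>m n" using assms unfolding unitary_mat_def by auto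
  show ?thesis unfolding orthon_def
  proof (intro ballI)
    fix i j assume "i \<in> {..<n}" "j \<in> {..<n}"
    hence ij: "i < n" "j < n" by auto
    have "(adj W * W) $$ (i,j) = ip n (\<lambda>r. W $$ (r,i)) (\<lambda>r. W $$ (r,j))"
      using W ij unfolding ip_def by (simp add: scalar_prod_def atLeast0LessThan)
    thus "ip n (\<lambda>r. W $$ (r, i)) (\<lambda>r. W $$ (r, j)) = (if i = j then 1 else 0)" using e ij by simp
  qed
qed


lemma ev_exists: assumes M: "(M :: complex mat) \<in> carrier_mat k k" and k: "k > 0"
  shows "\<exists>v \<mu>. eigenvector M v \<mu>"
proof -
  have "degree (char_poly M) = k" using degree_monic_char_poly[OF M] by simp
  hence "\<not> constant (poly (char_poly M))" using k by (simp add: constant_degree)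
  then obtain z where "poly (char_poly M) z = 0" using fundamental_theorem_of_algebra by blast
  hence "eigenvalue M z" using eigenvalue_root_char_poly[OF M] by simp
  thus ?thesis unfolding eigenvalue_def by blast
qed

lemma sum_split_at: fixes n m :: nat shows "m \<le> n \<Longrightarrow> (\<Sum>k<n. f k) = (\<Sum>k<m. f k) + (\<Sum>k<n-m. f (k+m))"
proof (induction n)
  case 0 thus ?case by simp
next
  case (Suc n)
  show ?case
  proof (cases "m = Suc n")
    case True thus ?thesis by simp
  next
    case False
    hence mn: "m \<le> n" using Suc.prems by simp
    hence "Suc n - m = Suc (n - m)" by simp
    thus ?thesis using Suc.IH[OF mn] mn by (simp add: add.assoc)
  qed
qed

definition dmat :: "nat \<Rightarrow> (nat \<Rightarrow> complex) \<Rightarrow> complex mat" where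
  "dmat n f = mat n n (\<lambda>(i,j). if i = j then f i else 0)"

lemma col_prod_eq:
  assumes "A \<in> carrier_mat n n" "W \<in> carrier_mat n n" "W' \<in> carrier_mat n n" "i < n" "r < n"
    "\<And>c. c < n \<Longrightarrow> W' $$ (c,i) = W $$ (c,i)"
  shows "(A * W') $$ (r,i) = (A * W) $$ (r,i)"
  using assms by (simp add: scalar_prod_def)

lemma spectral_step:
  assumes A: "A \<in> carrier_mat n n" and herm: "adj A = A" and mn: "m < n"
   and Wu: "unitary_mat n W" and ev: "\<forall>i<m. \<forall>r<n. (A*W)$$(r,i) = lam i * W$$(r,i)"
  shows "\<exists>W' lam'. unitary_mat n W' \<and> (\<forall>i<Suc m. \<forall>r<n. (A*W')$$(r,i) = lam' i * W'$$(r,i))"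
proof -
  have W: "W \<in> carrier_mat n n" and WW: "adj W * W = 1\<^sub>m n" using Wu unfolding unitary_mat_def by auto
  have WW': "W * adj W = 1\<^sub>m n" using unitary_right[OF Wu] .
  have aW: "adj W \<in> carrier_mat n n" using W by simp
  define B where "B = adj W * A * W"
  have B: "B \<in> carrier_mat n n" unfolding B_def using A W aW by (metis mult_carrier_mat)
  have AW: "A * W \<in> carrier_mat n n" using A W by (metis mult_carrier_mat)
  have WB: "W * B = A * W"
  proof -
    have "W * B = W * (adj W * (A * W))" unfolding B_def using assoc_mult_mat[OF aW A W] by simp
    also have "\<dots> = (W * adj W) * (A * W)" using assoc_mult_mat[OF W aW AW] by simp
    also have "\<dots> = A * W" using WW' AW by (simp add: left_mult_one_mat[OF AW])
    finally show ?thesis .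
  qed
  have Bh: "adj B = B"
  proof -
    have "adj B = adj W * adj (adj W * A)" unfolding B_def using A aW W by (simp add: adj_mult carrier_matD)
    also have "adj (adj W * A) = adj A * W" using A aW W by (simp add: adj_mult carrier_matD)
    finally show ?thesis unfolding B_def herm using assoc_mult_mat[OF aW A W] by simp
  qed
  have Bcol: "B $$ (j,i) = (if i = j then lam i else 0)" if i: "i < m" and j: "j < n" for i j
  proof -
    have "B $$ (j,i) = (adj W * (A * W)) $$ (j,i)" unfolding B_def using assoc_mult_mat[OF aW A W] by simp
    also have "\<dots> = (\<Sum>r<n. cnj (W $$ (r,j)) * (lam i * W $$ (r,i)))"
      using i j mn W A ev by (simp add: scalar_prod_def atLeast0LessThan)
    also have "\<dots> = lam i * (adj W * W) $$ (j,i)"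
      using i j mn W by (simp add: scalar_prod_def atLeast0LessThan sum_distrib_left algebra_simps)
    also have "\<dots> = (if i = j then lam i else 0)" using WW i j mn by simp
    finally show ?thesis .
  qed
  have Brow: "B $$ (i,j) = (if i = j then lam i else 0)" if i: "i < m" and j: "j < n" for i j
  proof -
    have "B $$ (i,j) = adj B $$ (i,j)" using Bh by simp
    also have "\<dots> = cnj (B $$ (j,i))" using B i j mn by simp
    also have "\<dots> = cnj (if i = j then lam i else 0)" using Bcol[OF i j] by simp
    also have "\<dots> = (if i = j then lam i else 0)"
    proof (cases "i = j")
      case True
      have "lam i = B $$ (i,i)" using Bcol[OF i, of i] i mn by simp
      also have "\<dots> = adj B $$ (i,i)" using Bh by simp
      also have "\<dots> = cnj (B $$ (i,i))" using B i mn by simp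
      finally have "cnj (lam i) = lam i" using \<open>lam i = B $$ (i,i)\<close> by simp
      thus ?thesis using True by simp
    qed simp
    finally show ?thesis .
  qed
  define B' where "B' = mat (n-m) (n-m) (\<lambda>(i,j). B $$ (i+m, j+m))"
  have B': "B' \<in> carrier_mat (n-m) (n-m)" unfolding B'_def by simp
  obtain x \<mu> where x: "eigenvector B' x \<mu>" using ev_exists[OF B'] mn by auto
  have xc: "x \<in> carrier_vec (n-m)" and x0: "x \<noteq> 0\<^sub>v (n-m)" and Bx: "B' *\<^sub>v x = \<mu> \<cdot>\<^sub>v x"
    using x B' unfolding eigenvector_def by auto
  define y where "y = vec n (\<lambda>k. if k < m then 0 else x $ (k-m))"
  have yc: "y \<in> carrier_vec n" unfolding y_def by simp
  have By: "B *\<^sub>v y = \<mu> \<cdot>\<^sub>v y"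
  proof (rule eq_vecI)
    fix i assume "i < dim_vec (\<mu> \<cdot>\<^sub>v y)"
    hence i: "i < n" unfolding y_def by simp
    have "(B *\<^sub>v y) $ i = (\<Sum>k<n. B $$ (i,k) * y $ k)"
      using B i yc by (simp add: scalar_prod_def atLeast0LessThan)
    also have "\<dots> = (\<Sum>k<m. B $$ (i,k) * y $ k) + (\<Sum>k<n-m. B $$ (i,k+m) * y $ (k+m))"
      using sum_split_at[of m n] mn by simp
    also have "(\<Sum>k<m. B $$ (i,k) * y $ k) = 0" unfolding y_def using mn by simp
    also have "(\<Sum>k<n-m. B $$ (i,k+m) * y $ (k+m)) = (\<Sum>k<n-m. B $$ (i,k+m) * x $ k)"
      unfolding y_def by (intro sum.cong) auto
    also have "\<dots> = (\<mu> \<cdot>\<^sub>v y) $ i"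
    proof (cases "i < m")
      case True
      have "(\<Sum>k<n-m. B $$ (i,k+m) * x $ k) = 0" using Brow[OF True] True by simp
      thus ?thesis using True i unfolding y_def by simp
    next
      case False
      have "(\<Sum>k<n-m. B $$ (i,k+m) * x $ k) = (B' *\<^sub>v x) $ (i - m)"
        using False i xc unfolding B'_def by (simp add: scalar_prod_def atLeast0LessThan)
      also have "\<dots> = \<mu> * x $ (i-m)" using Bx False i xc by simp
      finally show ?thesis using False i unfolding y_def by simp
    qed
    finally show "(B *\<^sub>v y) $ i = (\<mu> \<cdot>\<^sub>v y) $ i" by simp
  qed (use B in \<open>simp add: y_def\<close>)
  define v where "v = W *\<^sub>v y"
  have vc: "v \<in> carrier_vec n" unfolding v_def using mult_mat_vec_carrier[OF W yc] .
  have Av: "A *\<^sub>v v = \<mu> \<cdot>\<^sub>v v"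
  proof -
    have "A *\<^sub>v v = (A * W) *\<^sub>v y" unfolding v_def using assoc_mult_mat_vec[OF A W yc] by simp
    also have "\<dots> = (W * B) *\<^sub>v y" using WB by simp
    also have "\<dots> = W *\<^sub>v (\<mu> \<cdot>\<^sub>v y)" using assoc_mult_mat_vec[OF W B yc] By by simp
    also have "\<dots> = \<mu> \<cdot>\<^sub>v v" unfolding v_def using mult_mat_vec[OF W yc] by simp
    finally show ?thesis .
  qed
  have Wv: "adj W *\<^sub>v v = y"
    unfolding v_def using assoc_mult_mat_vec[OF aW W yc, symmetric] WW yc by simp
  obtain k where k: "k < n - m" "x $ k \<noteq> 0"
    using x0 xc by (metis eq_vecI carrier_vecD index_zero_vec(1) index_zero_vec(2))
  have yk: "y $ (k+m) \<noteq> 0" unfolding y_def using k by simp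
  have "\<exists>r<n. v $ r \<noteq> 0"
  proof (rule ccontr)
    assume "\<not> ?thesis"
    hence "v = 0\<^sub>v n" using vc by (intro eq_vecI) auto
    hence "y = 0\<^sub>v n" using Wv aW by (intro eq_vecI) (auto simp: scalar_prod_def)
    thus False using yk k by simp
  qed
  then obtain r where r: "r < n" "v $ r \<noteq> 0" by blast
  obtain c where c: "c \<noteq> 0" "ip n (\<lambda>q. c * v $ q) (\<lambda>q. c * v $ q) = 1"
    using normalize_vec[of r n "\<lambda>q. v $ q", OF r] by blast
  define f where "f = (\<lambda>i q. if i = m then c * v $ q else W $$ (q,i))"
  have orthW: "ip n (\<lambda>q. W $$ (q,i)) (\<lambda>q. v $ q) = 0" if i: "i < m" for i
  proof -
    have "ip n (\<lambda>q. W $$ (q,i)) (\<lambda>q. v $ q) = (adj W *\<^sub>v v) $ i"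
      using i mn W vc unfolding ip_def by (simp add: scalar_prod_def atLeast0LessThan)
    also have "\<dots> = 0" using Wv i mn unfolding y_def by simp
    finally show ?thesis .
  qed
  have ipc: "ip n u w = cnj (ip n w u)" for u w unfolding ip_def by (simp add: mult.commute)
  have onf: "orthon n {..m} f" unfolding orthon_def
  proof (intro ballI)
    fix a b assume a: "a \<in> {..m}" and b: "b \<in> {..m}"
    show "ip n (f a) (f b) = (if a = b then 1 else 0)"
    proof (cases "a = m")
      case True
      show ?thesis
      proof (cases "b = m")
        case True thus ?thesis using \<open>a = m\<close> c unfolding f_def by simp
      next
        case False
        hence bm: "b < m" using b by simp
        have "ip n (\<lambda>q. W $$ (q,b)) (\<lambda>q. c * v $ q) = 0"
          using orthW[OF bm] unfolding ip_def by (simp add: sum_distrib_left[symmetric] mult.left_commute)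
        hence "ip n (\<lambda>q. c * v $ q) (\<lambda>q. W $$ (q,b)) = 0" using ipc by (metis complex_cnj_zero)
        thus ?thesis using \<open>a = m\<close> False unfolding f_def by simp
      qed
    next
      case False
      hence am: "a < m" using a by simp
      show ?thesis
      proof (cases "b = m")
        case True
        have "ip n (\<lambda>q. W $$ (q,a)) (\<lambda>q. c * v $ q) = 0"
          using orthW[OF am] unfolding ip_def by (simp add: sum_distrib_left[symmetric] mult.left_commute)
        thus ?thesis using True False unfolding f_def by simp
      next
        case False
        hence bm: "b < m" using b by simp
        thus ?thesis using am \<open>a \<noteq> m\<close> False unitary_orthon[OF Wu] mn unfolding f_def orthon_def by simp
      qed
    qed
  qed
  obtain g where g: "\<forall>i\<in>{..m}. g i = f i" "orthon n {..<n} g"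
  proof -
    have "{..m} \<subseteq> {..<n}" using mn by auto
    thus ?thesis using complete_orthon[of "{..m}" n f] onf that by blast
  qed
  define W' where "W' = fam_mat n g"
  have W'u: "unitary_mat n W'" unfolding W'_def using fam_mat_unitary[OF g(2)] .
  have W': "W' \<in> carrier_mat n n" unfolding W'_def fam_mat_def by simp
  define lam' where "lam' = lam(m := \<mu>)"
  have "\<forall>i<Suc m. \<forall>r<n. (A*W')$$(r,i) = lam' i * W'$$(r,i)"
  proof (intro allI impI)
    fix i r assume i: "i < Suc m" and r: "r < n"
    have W'i: "W' $$ (q,i) = f i q" if "q < n" for q
      using g(1) i that mn unfolding W'_def fam_mat_def by simp
    show "(A*W')$$(r,i) = lam' i * W'$$(r,i)"
    proof (cases "i = m")
      case True
      have "(A*W')$$(r,i) = (\<Sum>q<n. A $$ (r,q) * (c * v $ q))"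
        using A W' r i mn W'i True unfolding f_def by (simp add: scalar_prod_def atLeast0LessThan)
      also have "\<dots> = c * (A *\<^sub>v v) $ r"
        using A r vc by (simp add: scalar_prod_def atLeast0LessThan sum_distrib_left algebra_simps)
      also have "\<dots> = \<mu> * (c * v $ r)" using Av r vc by simp
      finally show ?thesis using W'i[OF r] True unfolding lam'_def f_def by simp
    next
      case False
      hence im: "i < m" using i by simp
      have "(A*W')$$(r,i) = (A*W)$$(r,i)"
        by (rule col_prod_eq[OF A W W']) (use im mn r W'i False f_def in auto)
      thus ?thesis using ev im r W'i[OF r] False unfolding lam'_def f_def by simp
    qed
  qed
  thus ?thesis using W'u by blast
qed


lemma unitary_one: "unitary_mat n (1\<^sub>m n)"
  unfolding unitary_mat_def by simp

lemma dmat_carrier[simp]: "dmat n f \<in> carrier_mat n n" unfolding dmat_def by simp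

lemma mult_dmat_right: assumes W: "W \<in> carrier_mat n n" and r: "r < n" and i: "i < n"
  shows "(W * dmat n f) $$ (r,i) = W $$ (r,i) * f i"
proof -
  have "(W * dmat n f) $$ (r,i) = (\<Sum>k\<in>{0..<n}. W $$ (r,k) * (if k = i then f k else 0))"
    using W r i unfolding dmat_def by (simp add: scalar_prod_def)
  also have "\<dots> = (\<Sum>k\<in>{0..<n}. if k = i then W $$ (r,k) * f k else 0)"
    by (intro sum.cong) auto
  also have "\<dots> = W $$ (r,i) * f i" using i by simp
  finally show ?thesis .
qed

lemma mult_dmat_left: assumes W: "W \<in> carrier_mat n n" and r: "r < n" and i: "i < n"
  shows "(dmat n f * W) $$ (r,i) = f r * W $$ (r,i)"
proof -
  have "(dmat n f * W) $$ (r,i) = (\<Sum>k\<in>{0..<n}. (if r = k then f r else 0) * W $$ (k,i))"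
    using W r i unfolding dmat_def by (simp add: scalar_prod_def)
  also have "\<dots> = (\<Sum>k\<in>{0..<n}. if k = r then f r * W $$ (k,i) else 0)"
    by (intro sum.cong) auto
  also have "\<dots> = f r * W $$ (r,i)" using r by simp
  finally show ?thesis .
qed

lemma spectral_ind:
  assumes A: "A \<in> carrier_mat n n" and herm: "adj A = A"
  shows "m \<le> n \<Longrightarrow> \<exists>W lam. unitary_mat n W \<and> (\<forall>i<m. \<forall>r<n. (A*W)$$(r,i) = lam i * W$$(r,i))"
proof (induction m)
  case 0 thus ?case using unitary_one by blast
next
  case (Suc m)
  then obtain W lam where W1: "unitary_mat n W" and W2: "\<forall>i<m. \<forall>r<n. (A*W)$$(r,i) = lam i * W$$(r,i)" by auto
  have "m < n" using Suc.prems by simp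
  from spectral_step[OF A herm this W1 W2] show ?case .
qed

theorem spectral:
  assumes A: "A \<in> carrier_mat n n" and herm: "adj A = A"
  shows "\<exists>W lam. unitary_mat n W \<and> A = W * dmat n (\<lambda>i. complex_of_real (lam i)) * adj W"
proof -
  obtain W lam where Wu: "unitary_mat n W" and ev: "\<forall>i<n. \<forall>r<n. (A*W)$$(r,i) = lam i * W$$(r,i)"
    using spectral_ind[OF A herm, of n] by auto
  have W: "W \<in> carrier_mat n n" and WW: "adj W * W = 1\<^sub>m n" using Wu unfolding unitary_mat_def by auto
  have WW': "W * adj W = 1\<^sub>m n" using unitary_right[OF Wu] .
  have aW: "adj W \<in> carrier_mat n n" using W by simp
  define D where "D = dmat n lam"
  have Dc: "D \<in> carrier_mat n n" unfolding D_def by simp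
  have AW: "A * W = W * D"
  proof (rule eq_matI)
    fix r i assume "r < dim_row (W * D)" "i < dim_col (W * D)"
    hence ri: "r < n" "i < n" using W Dc by auto
    show "(A * W) $$ (r,i) = (W * D) $$ (r,i)"
      using ev ri mult_dmat_right[OF W ri] unfolding D_def by (simp add: mult.commute)
  qed (use A W Dc in simp_all)
  have A1: "A = W * D * adj W"
  proof -
    have "A = A * (W * adj W)" using WW' A by (simp add: right_mult_one_mat[OF A])
    also have "\<dots> = (A * W) * adj W" using assoc_mult_mat[OF A W aW] by simp
    finally show ?thesis using AW by simp
  qed
  have D1: "D = adj W * A * W"
  proof -
    have "adj W * A * W = adj W * (A * W)" using assoc_mult_mat[OF aW A W] by simp
    also have "\<dots> = adj W * (W * D)" using AW by simp
    also have "\<dots> = (adj W * W) * D" using assoc_mult_mat[OF aW W Dc] by simp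
    also have "\<dots> = D" using WW Dc by (simp add: left_mult_one_mat[OF Dc])
    finally show ?thesis by simp
  qed
  have Dh: "adj D = D"
  proof -
    have "adj D = adj W * adj (adj W * A)" unfolding D1 using A aW W by (simp add: adj_mult carrier_matD)
    also have "adj (adj W * A) = adj A * W" using A aW W by (simp add: adj_mult carrier_matD)
    finally show ?thesis unfolding D1 herm using assoc_mult_mat[OF aW A W] by simp
  qed
  have real: "lam i = complex_of_real (Re (lam i))" if i: "i < n" for i
  proof -
    have "lam i = D $$ (i,i)" using i unfolding D_def dmat_def by simp
    also have "\<dots> = adj D $$ (i,i)" using Dh by simp
    also have "\<dots> = cnj (lam i)" using i Dc unfolding D_def dmat_def by simp
    finally show ?thesis by (metis Reals_cnj_iff of_real_Re)
  qed
  have "D = dmat n (\<lambda>i. complex_of_real (Re (lam i)))"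
    unfolding D_def dmat_def using real by (intro eq_matI) auto
  hence "A = W * dmat n (\<lambda>i. complex_of_real ((\<lambda>i. Re (lam i)) i)) * adj W" using A1 by simp
  thus ?thesis using Wu by (intro exI[of _ W] exI[of _ "\<lambda>i. Re (lam i)"]) simp
qed


lemma uu1: assumes "unitary_mat n W" "Z \<in> carrier_mat n k" shows "W * (adj W * Z) = Z"
proof -
  have W: "W \<in> carrier_mat n n" using assms unfolding unitary_mat_def by auto
  have "W * (adj W * Z) = (W * adj W) * Z" using assoc_mult_mat[OF W _ assms(2), of "adj W"] W by simp
  thus ?thesis using unitary_right[OF assms(1)] assms(2) by simp
qed

lemma uu2: assumes "unitary_mat n W" "Z \<in> carrier_mat n k" shows "adj W * (W * Z) = Z"
proof -
  have W: "W \<in> carrier_mat n n" using assms unfolding unitary_mat_def by auto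
  have aW: "adj W \<in> carrier_mat n n" using W by simp
  have "adj W * (W * Z) = (adj W * W) * Z" using assoc_mult_mat[OF aW W assms(2)] by simp
  thus ?thesis using assms unfolding unitary_mat_def by simp
qed

lemma uu3: assumes "unitary_mat n W" "X \<in> carrier_mat k n" shows "X * (W * adj W) = X"
  using unitary_right[OF assms(1)] assms(2) by simp

lemma uu4: assumes "unitary_mat n W" "X \<in> carrier_mat k n" shows "X * (adj W * W) = X"
  using assms unfolding unitary_mat_def by simp

lemma assoc_dim: shows "dim_col A = dim_row B \<Longrightarrow> dim_col B = dim_row C \<Longrightarrow> A * B * C = A * (B * C)"
proof -
  have "A \<in> carrier_mat (dim_row A) (dim_col A)" "B \<in> carrier_mat (dim_row B) (dim_col B)" "C \<in> carrier_mat (dim_row C) (dim_col C)"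
    by (rule carrier_matI, rule refl, rule refl)+
  thus "dim_col A = dim_row B \<Longrightarrow> dim_col B = dim_row C \<Longrightarrow> A * B * C = A * (B * C)"
    using assoc_mult_mat by metis
qed

lemma uu1': "unitary_mat n W \<Longrightarrow> dim_row Z = n \<Longrightarrow> W * (adj W * Z) = Z"
  by (rule uu1[of n W Z "dim_col Z"], assumption, rule carrier_matI, assumption, rule refl)
lemma uu2': "unitary_mat n W \<Longrightarrow> dim_row Z = n \<Longrightarrow> adj W * (W * Z) = Z"
  by (rule uu2[of n W Z "dim_col Z"], assumption, rule carrier_matI, assumption, rule refl)
lemma uu3': "unitary_mat n W \<Longrightarrow> dim_col X = n \<Longrightarrow> X * (W * adj W) = X"
  by (rule uu3[of n W X "dim_row X"], assumption, rule carrier_matI, rule refl, assumption)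
lemma uu4': "unitary_mat n W \<Longrightarrow> dim_col X = n \<Longrightarrow> X * (adj W * W) = X"
  by (rule uu4[of n W X "dim_row X"], assumption, rule carrier_matI, rule refl, assumption)

lemma conj_mult: assumes "unitary_mat n W" "X \<in> carrier_mat n n" "Y \<in> carrier_mat n n"
  shows "(W*X*adj W) * (W*Y*adj W) = W*(X*Y)*adj W"
proof -
  have W: "W \<in> carrier_mat n n" using assms unfolding unitary_mat_def by auto
  have aW: "adj W \<in> carrier_mat n n" using W by simp
  show ?thesis using assms W aW by (simp add: assoc_dim uu1' uu2' uu3' uu4' carrier_matD)
qed

lemma conj_mult2: assumes "unitary_mat n W" "X \<in> carrier_mat n n" "Y \<in> carrier_mat n n"
  shows "(adj W*X*W) * (adj W*Y*W) = adj W*(X*Y)*W"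
proof -
  have W: "W \<in> carrier_mat n n" using assms unfolding unitary_mat_def by auto
  have aW: "adj W \<in> carrier_mat n n" using W by simp
  show ?thesis using assms W aW by (simp add: assoc_dim uu1' uu2' uu3' uu4' carrier_matD)
qed

lemma conj_back1: assumes "unitary_mat n W" "X \<in> carrier_mat n n"
  shows "W * (adj W * X * W) * adj W = X"
proof -
  have W: "W \<in> carrier_mat n n" using assms unfolding unitary_mat_def by auto
  have aW: "adj W \<in> carrier_mat n n" using W by simp
  show ?thesis using assms W aW by (simp add: assoc_dim uu1' uu2' uu3' uu4' carrier_matD)
qed

lemma conj_back2: assumes "unitary_mat n W" "X \<in> carrier_mat n n"
  shows "adj W * (W * X * adj W) * W = X"
proof -
  have W: "W \<in> carrier_mat n n" using assms unfolding unitary_mat_def by auto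
  have aW: "adj W \<in> carrier_mat n n" using W by simp
  show ?thesis using assms W aW by (simp add: assoc_dim uu1' uu2' uu3' uu4' carrier_matD)
qed


definition ipv :: "complex vec \<Rightarrow> complex vec \<Rightarrow> complex" where
  "ipv u w = (\<Sum>i<dim_vec u. cnj (u $ i) * w $ i)"

lemma psdD: assumes "psd n A"
  shows "A \<in> carrier_mat n n" "adj A = A" "\<And>v. v \<in> carrier_vec n \<Longrightarrow> 0 \<le> Re (ipv v (A *\<^sub>v v))"
  using assms unfolding psd_def ipv_def by auto

lemma psdI: assumes "A \<in> carrier_mat n n" "adj A = A" "\<And>v. v \<in> carrier_vec n \<Longrightarrow> 0 \<le> Re (ipv v (A *\<^sub>v v))"
  shows "psd n A"
  using assms unfolding psd_def ipv_def by auto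

lemma ipv_adj: assumes W: "W \<in> carrier_mat n m" and v: "v \<in> carrier_vec n" and z: "z \<in> carrier_vec m"
  shows "ipv v (W *\<^sub>v z) = ipv (adj W *\<^sub>v v) z"
proof -
  have "ipv v (W *\<^sub>v z) = (\<Sum>i<n. \<Sum>k<m. cnj (v $ i) * (W $$ (i,k) * z $ k))"
    using W v z unfolding ipv_def by (simp add: scalar_prod_def atLeast0LessThan sum_distrib_left)
  also have "\<dots> = (\<Sum>k<m. \<Sum>i<n. cnj (v $ i) * (W $$ (i,k) * z $ k))" by (rule sum.swap)
  also have "\<dots> = (\<Sum>k<m. (\<Sum>i<n. cnj (v $ i) * W $$ (i,k)) * z $ k)"
    by (simp add: sum_distrib_right mult.assoc)
  also have "\<dots> = ipv (adj W *\<^sub>v v) z"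
    using W v z unfolding ipv_def by (simp add: scalar_prod_def atLeast0LessThan mult.commute)
  finally show ?thesis .
qed

lemma ipv_adj2: assumes W: "W \<in> carrier_mat m n" and v: "v \<in> carrier_vec n" and z: "z \<in> carrier_vec m"
  shows "ipv v (adj W *\<^sub>v z) = ipv (W *\<^sub>v v) z"
  using ipv_adj[of "adj W" n m v z] assms by simp

lemma ipv_add: assumes "x \<in> carrier_vec (dim_vec u)" "y \<in> carrier_vec (dim_vec u)"
  shows "ipv u (x + y) = ipv u x + ipv u y"
  using assms unfolding ipv_def by (simp add: distrib_left sum.distrib)

lemma ipv_dmat: assumes u: "u \<in> carrier_vec n"
  shows "ipv u (dmat n f *\<^sub>v u) = (\<Sum>k<n. f k * (cnj (u $ k) * u $ k))"
proof -
  have "(dmat n f *\<^sub>v u) $ k = f k * u $ k" if k: "k < n" for k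
  proof -
    have "(dmat n f *\<^sub>v u) $ k = (\<Sum>j\<in>{0..<n}. (if k = j then f k else 0) * u $ j)"
      using k u unfolding dmat_def by (simp add: scalar_prod_def)
    also have "\<dots> = (\<Sum>j\<in>{0..<n}. if j = k then f k * u $ j else 0)" by (intro sum.cong) auto
    finally show ?thesis using k by simp
  qed
  thus ?thesis using u unfolding ipv_def by (simp add: mult.left_commute)
qed

lemma dmat_adj: "adj (dmat n (\<lambda>i. complex_of_real (f i))) = dmat n (\<lambda>i. complex_of_real (f i))"
  unfolding dmat_def by (rule eq_matI) auto

lemma psd_decomp:
  assumes Wu: "unitary_mat n W" and nn: "\<And>i. i < n \<Longrightarrow> lam i \<ge> 0"
  shows "psd n (W * dmat n (\<lambda>i. complex_of_real (lam i)) * adj W)"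
proof -
  have W: "W \<in> carrier_mat n n" using Wu unfolding unitary_mat_def by auto
  define D where "D = dmat n (\<lambda>i. complex_of_real (lam i))"
  have Dc: "D \<in> carrier_mat n n" unfolding D_def by simp
  have aW: "adj W \<in> carrier_mat n n" using W by simp
  have C: "W * D * adj W \<in> carrier_mat n n" using W Dc aW by (metis mult_carrier_mat)
  have H: "adj (W * D * adj W) = W * D * adj W"
  proof -
    have "adj (W * D * adj W) = adj (adj W) * adj (W * D)" using W Dc by (simp add: adj_mult carrier_matD)
    also have "adj (W * D) = adj D * adj W" using W Dc by (simp add: adj_mult carrier_matD)
    also have "adj D = D" unfolding D_def by (rule dmat_adj)
    finally have "adj (W * D * adj W) = W * (D * adj W)" by simp
    thus ?thesis using assoc_mult_mat[OF W Dc aW] by simp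
  qed
  show ?thesis unfolding D_def[symmetric]
  proof (rule psdI[OF C H])
    fix v :: "complex vec" assume v: "v \<in> carrier_vec n"
    define u where "u = adj W *\<^sub>v v"
    have u: "u \<in> carrier_vec n" unfolding u_def using aW v by simp
    have "(W * D * adj W) *\<^sub>v v = W *\<^sub>v (D *\<^sub>v u)"
    proof -
    have WD: "W * D \<in> carrier_mat n n" using W Dc by (metis mult_carrier_mat)
    have u': "adj W *\<^sub>v v \<in> carrier_vec n" using aW v by simp
    show ?thesis unfolding u_def using assoc_mult_mat_vec[OF WD aW v] assoc_mult_mat_vec[OF W Dc u'] by simp
  qed
    hence "ipv v ((W * D * adj W) *\<^sub>v v) = ipv u (D *\<^sub>v u)"
      using ipv_adj[OF W v, of "D *\<^sub>v u"] Dc u unfolding u_def by simp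
    also have "\<dots> = (\<Sum>k<n. complex_of_real (lam k) * (cnj (u $ k) * u $ k))"
      unfolding D_def by (rule ipv_dmat[OF u])
    finally have "Re (ipv v ((W * D * adj W) *\<^sub>v v)) = (\<Sum>k<n. lam k * (cmod (u $ k))\<^sup>2)"
      by (simp add: complex_norm_square[symmetric] mult.commute del: of_real_power)
    also have "\<dots> \<ge> 0" using nn by (intro sum_nonneg) simp
    finally show "0 \<le> Re (ipv v ((W * D * adj W) *\<^sub>v v))" .
  qed
qed

lemma psd_decomp_nonneg:
  assumes Wu: "unitary_mat n W" and P: "psd n (W * dmat n (\<lambda>i. complex_of_real (lam i)) * adj W)"
    and i: "i < n"
  shows "lam i \<ge> 0"
proof -
  have W: "W \<in> carrier_mat n n" using Wu unfolding unitary_mat_def by auto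
  define D where "D = dmat n (\<lambda>i. complex_of_real (lam i))"
  have Dc: "D \<in> carrier_mat n n" unfolding D_def by simp
  have aW: "adj W \<in> carrier_mat n n" using W by simp
  define v where "v = col W i"
  have v: "v \<in> carrier_vec n" unfolding v_def using col_carrier_vec[OF i W] .
  define u where "u = adj W *\<^sub>v v"
  have "u = col (adj W * W) i" unfolding u_def v_def using col_mult2[OF aW W i] by simp
  hence ue: "u = unit_vec n i" using Wu i unfolding unitary_mat_def by simp
  have u: "u \<in> carrier_vec n" unfolding ue by simp
  have "(W * D * adj W) *\<^sub>v v = W *\<^sub>v (D *\<^sub>v u)"
  proof -
    have WD: "W * D \<in> carrier_mat n n" using W Dc by (metis mult_carrier_mat)
    have u': "adj W *\<^sub>v v \<in> carrier_vec n" using aW v by simp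
    show ?thesis unfolding u_def using assoc_mult_mat_vec[OF WD aW v] assoc_mult_mat_vec[OF W Dc u'] by simp
  qed
  hence "ipv v ((W * D * adj W) *\<^sub>v v) = ipv u (D *\<^sub>v u)"
    using ipv_adj[OF W v, of "D *\<^sub>v u"] Dc u unfolding u_def by simp
  also have "\<dots> = (\<Sum>k<n. complex_of_real (lam k) * (cnj (u $ k) * u $ k))"
    unfolding D_def by (rule ipv_dmat[OF u])
  also have "\<dots> = (\<Sum>k<n. if k = i then complex_of_real (lam k) else 0)"
    unfolding ue using i by (intro sum.cong) auto
  also have "\<dots> = complex_of_real (lam i)" using i by simp
  finally show ?thesis using psdD(3)[OF P v] unfolding D_def by simp
qed


lemma dmat_mult: "dmat n f * dmat n g = dmat n (\<lambda>i. f i * g i)"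
proof (rule eq_matI)
  fix r i assume "r < dim_row (dmat n (\<lambda>i. f i * g i))" "i < dim_col (dmat n (\<lambda>i. f i * g i))"
  hence ri: "r < n" "i < n" unfolding dmat_def by auto
  show "(dmat n f * dmat n g) $$ (r,i) = dmat n (\<lambda>i. f i * g i) $$ (r,i)"
    using mult_dmat_right[OF dmat_carrier ri, of f g] ri unfolding dmat_def by simp
qed (simp_all add: dmat_def)

lemma sqrt_unique:
  assumes Wu: "unitary_mat n W" and nn: "\<And>i. i < n \<Longrightarrow> lam i \<ge> 0"
    and P: "psd n B" and BB: "B * B = W * dmat n (\<lambda>i. complex_of_real (lam i)) * adj W"
  shows "B = W * dmat n (\<lambda>i. complex_of_real (sqrt (lam i))) * adj W"
proof -
  have W: "W \<in> carrier_mat n n" using Wu unfolding unitary_mat_def by auto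
  have aW: "adj W \<in> carrier_mat n n" using W by simp
  have B: "B \<in> carrier_mat n n" and Bh: "adj B = B" using psdD[OF P] by auto
  define D where "D = dmat n (\<lambda>i. complex_of_real (lam i))"
  define D' where "D' = dmat n (\<lambda>i. complex_of_real (sqrt (lam i)))"
  have Dc: "D \<in> carrier_mat n n" and D'c: "D' \<in> carrier_mat n n" unfolding D_def D'_def by simp_all
  define B' where "B' = adj W * B * W"
  have B'c: "B' \<in> carrier_mat n n" unfolding B'_def using aW B W by (metis mult_carrier_mat)
  have B'B': "B' * B' = D"
    unfolding B'_def using conj_mult2[OF Wu B B] BB conj_back2[OF Wu Dc] unfolding D_def by simp
  have comm: "B' * D = D * B'"
  proof -
    have "B' * D = B' * (B' * B')" using B'B' by simp
    also have "\<dots> = (B' * B') * B'" using assoc_mult_mat[OF B'c B'c B'c] by simp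
    finally show ?thesis using B'B' by simp
  qed
  have comm_idx: "B' $$ (i,j) * lam j = lam i * B' $$ (i,j)" if ij: "i < n" "j < n" for i j
  proof -
    have "(B' * D) $$ (i,j) = (D * B') $$ (i,j)" using comm by simp
    thus ?thesis using mult_dmat_right[OF B'c ij] mult_dmat_left[OF B'c ij] unfolding D_def by simp
  qed
  have comm': "B' * D' = D' * B'"
  proof (rule eq_matI)
    fix i j assume "i < dim_row (D' * B')" "j < dim_col (D' * B')"
    hence ij: "i < n" "j < n" using B'c D'c by auto
    have "B' $$ (i,j) * sqrt (lam j) = sqrt (lam i) * B' $$ (i,j)"
    proof (cases "B' $$ (i,j) = 0")
      case False
      hence "complex_of_real (lam j) = complex_of_real (lam i)" using comm_idx[OF ij] by (simp add: mult.commute)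
      hence "lam j = lam i" by simp
      thus ?thesis by (simp add: mult.commute)
    qed simp
    thus "(B' * D') $$ (i,j) = (D' * B') $$ (i,j)"
      using mult_dmat_right[OF B'c ij] mult_dmat_left[OF B'c ij] unfolding D'_def by simp
  qed (use B'c D'c in simp_all)
  have D'D': "D' * D' = D" unfolding D'_def D_def dmat_mult
    by (rule eq_matI) (use nn in \<open>auto simp: dmat_def of_real_mult[symmetric] simp del: of_real_mult\<close>)
  have B'h: "adj B' = B'"
  proof -
    have "adj B' = adj W * adj (adj W * B)" unfolding B'_def using B aW W by (simp add: adj_mult carrier_matD)
    also have "adj (adj W * B) = adj B * W" using B aW W by (simp add: adj_mult carrier_matD)
    finally show ?thesis unfolding B'_def Bh using assoc_mult_mat[OF aW B W] by simp
  qed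
  have D'h: "adj D' = D'" unfolding D'_def by (rule dmat_adj)
  define C where "C = B' - D'"
  define PP where "PP = B' + D'"
  have Cc: "C \<in> carrier_mat n n" unfolding C_def using minus_carrier_mat[OF D'c] .
  have PPc: "PP \<in> carrier_mat n n" unfolding PP_def using B'c D'c by simp
  have idx_mult: "(X * Y) $$ (i,j) = (\<Sum>k<n. X $$ (i,k) * Y $$ (k,j))"
    if "X \<in> carrier_mat n n" "Y \<in> carrier_mat n n" "i < n" "j < n" for X Y i j
    using that by (simp add: scalar_prod_def atLeast0LessThan)
  have PC: "(PP * C) $$ (i,j) = 0" if ij: "i < n" "j < n" for i j
  proof -
    have "(PP * C) $$ (i,j) = (\<Sum>k<n. (B' $$ (i,k) + D' $$ (i,k)) * (B' $$ (k,j) - D' $$ (k,j)))"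
      using idx_mult[OF PPc Cc ij] ij B'c D'c unfolding PP_def C_def by simp
    also have "\<dots> = (B' * B') $$ (i,j) - (B' * D') $$ (i,j) + (D' * B') $$ (i,j) - (D' * D') $$ (i,j)"
      using idx_mult[OF B'c B'c ij] idx_mult[OF B'c D'c ij] idx_mult[OF D'c B'c ij] idx_mult[OF D'c D'c ij]
      by (simp add: algebra_simps sum.distrib sum_subtractf)
    also have "\<dots> = 0" using B'B' D'D' comm' by simp
    finally show ?thesis .
  qed
  have colz: "(D' * C) $$ (k,j) = 0 \<and> (B' * C) $$ (k,j) = 0" if kj: "k < n" "j < n" for k j
  proof -
    define c where "c = col C j"
    have c: "c \<in> carrier_vec n" unfolding c_def using col_carrier_vec[OF kj(2) Cc] .
    have PCc: "PP *\<^sub>v c = B' *\<^sub>v c + D' *\<^sub>v c" unfolding PP_def using add_mult_distrib_mat_vec[OF B'c D'c c] .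
    have "PP *\<^sub>v c = col (PP * C) j" unfolding c_def using col_mult2[OF PPc Cc kj(2)] by simp
    also have "\<dots> = 0\<^sub>v n" using PC kj PPc Cc by (intro eq_vecI) auto
    finally have Pc0: "PP *\<^sub>v c = 0\<^sub>v n" .
    have "ipv c (PP *\<^sub>v c) = 0" unfolding Pc0 ipv_def using c by simp
    hence sum0: "ipv c (B' *\<^sub>v c) + ipv c (D' *\<^sub>v c) = 0"
      unfolding PCc using ipv_add[of "B' *\<^sub>v c" c "D' *\<^sub>v c"] c B'c D'c by simp
    have Bpos: "0 \<le> Re (ipv c (B' *\<^sub>v c))"
    proof -
      have Wc: "W *\<^sub>v c \<in> carrier_vec n" using W c by simp
      have "B' *\<^sub>v c = adj W *\<^sub>v (B *\<^sub>v (W *\<^sub>v c))"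
      proof -
        have aWB: "adj W * B \<in> carrier_mat n n" using aW B by (metis mult_carrier_mat)
        show ?thesis unfolding B'_def using assoc_mult_mat_vec[OF aWB W c] assoc_mult_mat_vec[OF aW B Wc] by simp
      qed
      hence "ipv c (B' *\<^sub>v c) = ipv (W *\<^sub>v c) (B *\<^sub>v (W *\<^sub>v c))"
        using ipv_adj2[OF W c, of "B *\<^sub>v (W *\<^sub>v c)"] B Wc by simp
      thus ?thesis using psdD(3)[OF P Wc] by simp
    qed
    have Dval: "Re (ipv c (D' *\<^sub>v c)) = (\<Sum>k<n. sqrt (lam k) * (cmod (c $ k))\<^sup>2)"
      unfolding D'_def ipv_dmat[OF c] by (simp add: complex_norm_square[symmetric] mult.commute del: of_real_power)
    have Dnn: "\<And>k. k \<in> {..<n} \<Longrightarrow> 0 \<le> sqrt (lam k) * (cmod (c $ k))\<^sup>2" using nn by simp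
    have "Re (ipv c (D' *\<^sub>v c)) \<ge> 0" unfolding Dval using Dnn by (intro sum_nonneg) auto
    hence "Re (ipv c (D' *\<^sub>v c)) = 0" using sum0 Bpos
      by (metis add.commute add_nonneg_eq_0_iff plus_complex.simps(1) zero_complex.simps(1))
    hence "(\<Sum>k<n. sqrt (lam k) * (cmod (c $ k))\<^sup>2) = 0" unfolding Dval .
    hence "\<forall>k\<in>{..<n}. sqrt (lam k) * (cmod (c $ k))\<^sup>2 = 0"
      by (metis (no_types, lifting) Dnn finite_lessThan sum_nonneg_eq_0_iff)
    hence "sqrt (lam k) * (cmod (c $ k))\<^sup>2 = 0" using kj by simp
    hence ck: "complex_of_real (sqrt (lam k)) * c $ k = 0" by simp
    have D'C: "(D' * C) $$ (k,j) = 0"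
      using mult_dmat_left[OF Cc kj, of "\<lambda>i. complex_of_real (sqrt (lam i))"] ck kj unfolding D'_def c_def
      using Cc by simp
    have "(PP * C) $$ (k,j) = (B' * C) $$ (k,j) + (D' * C) $$ (k,j)"
      using idx_mult[OF PPc Cc kj] idx_mult[OF B'c Cc kj] idx_mult[OF D'c Cc kj] kj B'c D'c
      unfolding PP_def by (simp add: algebra_simps sum.distrib)
    hence "(B' * C) $$ (k,j) = 0" using PC[OF kj] D'C by simp
    thus ?thesis using D'C by simp
  qed
  have CC: "(C * C) $$ (k,j) = 0" if kj: "k < n" "j < n" for k j
  proof -
    have "(C * C) $$ (k,j) = (\<Sum>l<n. C $$ (k,l) * C $$ (l,j))" by (rule idx_mult[OF Cc Cc kj])
    also have "\<dots> = (\<Sum>l<n. (B' $$ (k,l) - D' $$ (k,l)) * C $$ (l,j))"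
    proof (rule sum.cong[OF refl])
      fix l assume "l \<in> {..<n}"
      hence "C $$ (k,l) = B' $$ (k,l) - D' $$ (k,l)" using kj B'c D'c unfolding C_def by simp
      thus "C $$ (k,l) * C $$ (l,j) = (B' $$ (k,l) - D' $$ (k,l)) * C $$ (l,j)" by simp
    qed
    also have "\<dots> = (\<Sum>l<n. B' $$ (k,l) * C $$ (l,j)) - (\<Sum>l<n. D' $$ (k,l) * C $$ (l,j))"
      by (simp add: left_diff_distrib sum_subtractf)
    also have "\<dots> = (B' * C) $$ (k,j) - (D' * C) $$ (k,j)"
      using idx_mult[OF B'c Cc kj] idx_mult[OF D'c Cc kj] by simp
    finally have "(C * C) $$ (k,j) = (B' * C) $$ (k,j) - (D' * C) $$ (k,j)" .
    thus ?thesis using colz[OF kj] by simp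
  qed
  have Ch: "C $$ (i,j) = cnj (C $$ (j,i))" if ij: "i < n" "j < n" for i j
  proof -
    have "B' $$ (i,j) = cnj (B' $$ (j,i))" using B'h ij B'c by (metis adj_index carrier_matD(1) carrier_matD(2))
    moreover have "D' $$ (i,j) = cnj (D' $$ (j,i))" using D'h ij D'c by (metis adj_index carrier_matD(1) carrier_matD(2))
    ultimately show ?thesis unfolding C_def using ij B'c D'c by simp
  qed
  have C0: "C $$ (l,j) = 0" if lj: "l < n" "j < n" for l j
  proof -
    have "0 = (C * C) $$ (j,j)" using CC[OF lj(2) lj(2)] by simp
    also have "\<dots> = (\<Sum>k<n. C $$ (j,k) * C $$ (k,j))" using idx_mult[OF Cc Cc lj(2) lj(2)] .
    also have "\<dots> = (\<Sum>k<n. complex_of_real ((cmod (C $$ (k,j)))\<^sup>2))"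
    proof (rule sum.cong[OF refl])
      fix k assume "k \<in> {..<n}"
      hence "k < n" by simp
      hence "C $$ (j,k) = cnj (C $$ (k,j))" by (rule Ch[OF lj(2)])
      thus "C $$ (j,k) * C $$ (k,j) = complex_of_real ((cmod (C $$ (k,j)))\<^sup>2)"
        by (simp only: complex_norm_square mult.commute)
    qed
    finally have "(\<Sum>k<n. (cmod (C $$ (k,j)))\<^sup>2) = 0" by (metis of_real_eq_0_iff of_real_sum)
    hence "\<forall>k\<in>{..<n}. (cmod (C $$ (k,j)))\<^sup>2 = 0" by (metis (no_types, lifting) zero_le_power2 finite_lessThan sum_nonneg_eq_0_iff)
    thus ?thesis using lj by simp
  qed
  have "B' = D'"
  proof (rule eq_matI)
    fix i j assume "i < dim_row D'" "j < dim_col D'"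
    hence ij: "i < n" "j < n" using D'c by auto
    show "B' $$ (i,j) = D' $$ (i,j)" using C0[OF ij] ij B'c D'c unfolding C_def by simp
  qed (use B'c D'c in simp_all)
  hence "W * B' * adj W = W * D' * adj W" by simp
  thus ?thesis unfolding B'_def D'_def using conj_back1[OF Wu B] by simp
qed


lemma psd_decomposition:
  assumes P: "psd n A"
  shows "\<exists>W lam. unitary_mat n W \<and> (\<forall>i<n. lam i \<ge> 0) \<and> A = W * dmat n (\<lambda>i. complex_of_real (lam i)) * adj W"
proof -
  obtain W lam where Wu: "unitary_mat n W" and A: "A = W * dmat n (\<lambda>i. complex_of_real (lam i)) * adj W"
    using spectral[OF psdD(1,2)[OF P]] by blast
  have "\<forall>i<n. lam i \<ge> 0" using psd_decomp_nonneg[OF Wu] P A by metis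
  thus ?thesis using Wu A by blast
qed

lemma sqrt_ex1:
  assumes P: "psd n A"
  shows "\<exists>!B. psd n B \<and> B * B = A"
proof -
  obtain W lam where Wu: "unitary_mat n W" and nn: "\<forall>i<n. lam i \<ge> 0"
    and A: "A = W * dmat n (\<lambda>i. complex_of_real (lam i)) * adj W"
    using psd_decomposition[OF P] by blast
  define S where "S = W * dmat n (\<lambda>i. complex_of_real (sqrt (lam i))) * adj W"
  have PS: "psd n S" unfolding S_def by (rule psd_decomp[OF Wu]) (use nn in simp)
  have "S * S = W * (dmat n (\<lambda>i. complex_of_real (sqrt (lam i))) * dmat n (\<lambda>i. complex_of_real (sqrt (lam i)))) * adj W"
    unfolding S_def by (rule conj_mult[OF Wu]) simp_all
  also have "dmat n (\<lambda>i. complex_of_real (sqrt (lam i))) * dmat n (\<lambda>i. complex_of_real (sqrt (lam i)))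
      = dmat n (\<lambda>i. complex_of_real (lam i))"
    unfolding dmat_mult by (rule eq_matI) (use nn in \<open>auto simp: dmat_def of_real_mult[symmetric] simp del: of_real_mult\<close>)
  finally have SS: "S * S = A" using A by simp
  show ?thesis
  proof (rule ex1I[of _ S])
    show "psd n S \<and> S * S = A" using PS SS by simp
    fix B assume "psd n B \<and> B * B = A"
    thus "B = S" unfolding S_def using sqrt_unique[OF Wu, of lam B] nn A by auto
  qed
qed

lemma psd_sqrt_props:
  assumes P: "psd n A"
  shows "psd n (psd_sqrt n A)" "psd_sqrt n A * psd_sqrt n A = A"
proof -
  have "psd n (psd_sqrt n A) \<and> psd_sqrt n A * psd_sqrt n A = A"
    unfolding psd_sqrt_def by (rule theI'[OF sqrt_ex1[OF P]])
  thus "psd n (psd_sqrt n A)" "psd_sqrt n A * psd_sqrt n A = A" by auto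
qed


lemma freedom:
  assumes P: "psd n S" and Y: "Y \<in> carrier_mat n n" and YY: "Y * adj Y = S * S"
  shows "\<exists>Z. unitary_mat n Z \<and> Y = S * Z"
proof -
  obtain V sig where Vu: "unitary_mat n V" and nn: "\<forall>i<n. sig i \<ge> 0"
    and S: "S = V * dmat n (\<lambda>i. complex_of_real (sig i)) * adj V"
    using psd_decomposition[OF P] by blast
  have V: "V \<in> carrier_mat n n" using Vu unfolding unitary_mat_def by auto
  have aV: "adj V \<in> carrier_mat n n" using V by simp
  define Sg where "Sg = dmat n (\<lambda>i. complex_of_real (sig i))"
  have Sgc: "Sg \<in> carrier_mat n n" unfolding Sg_def by simp
  define T where "T = adj Y * V"
  have Tc: "T \<in> carrier_mat n n" unfolding T_def using Y V by (metis adj_carrier mult_carrier_mat)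
  have TT: "adj T * T = Sg * Sg"
  proof -
    have "adj T = adj V * Y" unfolding T_def using Y V by (simp add: adj_mult carrier_matD)
    hence "adj T * T = adj V * (Y * adj Y) * V" unfolding T_def using Y V aV
      by (simp add: assoc_dim carrier_matD)
    also have "\<dots> = adj V * (V * (Sg * Sg) * adj V) * V"
      unfolding YY S Sg_def[symmetric] using conj_mult[OF Vu Sgc Sgc] by simp
    also have "\<dots> = Sg * Sg" using conj_back2[OF Vu] Sgc by simp
    finally show ?thesis .
  qed
  have TTi: "(\<Sum>r<n. cnj (T $$ (r,i)) * T $$ (r,j)) = (if i = j then complex_of_real ((sig i)\<^sup>2) else 0)"
    if ij: "i < n" "j < n" for i j
  proof -
    have "(adj T * T) $$ (i,j) = (\<Sum>r<n. cnj (T $$ (r,i)) * T $$ (r,j))"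
      using Tc ij by (simp add: scalar_prod_def atLeast0LessThan)
    moreover have "(Sg * Sg) $$ (i,j) = (if i = j then complex_of_real ((sig i)\<^sup>2) else 0)"
      unfolding Sg_def dmat_mult using ij by (simp add: dmat_def power2_eq_square)
    ultimately show ?thesis using TT by simp
  qed
  define I where "I = {i. i < n \<and> sig i \<noteq> 0}"
  define f where "f = (\<lambda>i r. T $$ (r,i) / complex_of_real (sig i))"
  have onf: "orthon n I f" unfolding orthon_def
  proof (intro ballI)
    fix i j assume i: "i \<in> I" and j: "j \<in> I"
    have "ip n (f i) (f j) = (\<Sum>r<n. cnj (T $$ (r,i)) * T $$ (r,j)) / (complex_of_real (sig i) * complex_of_real (sig j))"
      unfolding ip_def f_def by (simp add: sum_divide_distrib)
    also have "\<dots> = (if i = j then 1 else 0)"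
      using TTi[of i j] i j unfolding I_def by (simp add: power2_eq_square)
    finally show "ip n (f i) (f j) = (if i = j then 1 else 0)" .
  qed
  obtain g where g: "\<forall>i\<in>I. g i = f i" "orthon n {..<n} g"
    using complete_orthon[of I n f] onf unfolding I_def by auto
  define Q where "Q = fam_mat n g"
  have Qu: "unitary_mat n Q" unfolding Q_def using fam_mat_unitary[OF g(2)] .
  have Qc: "Q \<in> carrier_mat n n" unfolding Q_def fam_mat_def by simp
  have TQ: "T = Q * Sg"
  proof (rule eq_matI)
    fix r i assume "r < dim_row (Q * Sg)" "i < dim_col (Q * Sg)"
    hence ri: "r < n" "i < n" using Qc Sgc by auto
    have "(Q * Sg) $$ (r,i) = Q $$ (r,i) * complex_of_real (sig i)"
      unfolding Sg_def by (rule mult_dmat_right[OF Qc ri])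
    also have "\<dots> = T $$ (r,i)"
    proof (cases "sig i = 0")
      case True
      have "(\<Sum>k<n. (cmod (T $$ (k,i)))\<^sup>2) = 0"
      proof -
        have "(\<Sum>k<n. complex_of_real ((cmod (T $$ (k,i)))\<^sup>2)) = (\<Sum>r<n. cnj (T $$ (r,i)) * T $$ (r,i))"
          by (intro sum.cong refl) (simp only: complex_norm_square mult.commute)
        also have "\<dots> = 0" using TTi[OF ri(2) ri(2)] True by simp
        finally show ?thesis by (metis of_real_eq_0_iff of_real_sum)
      qed
      hence "\<forall>k\<in>{..<n}. (cmod (T $$ (k,i)))\<^sup>2 = 0"
        by (metis (no_types, lifting) zero_le_power2 finite_lessThan sum_nonneg_eq_0_iff)
      thus ?thesis using True ri by simp
    next
      case False
      hence "i \<in> I" using ri unfolding I_def by simp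
      hence "Q $$ (r,i) = f i r" using g(1) ri unfolding Q_def fam_mat_def by simp
      thus ?thesis using False unfolding f_def by simp
    qed
    finally show "T $$ (r,i) = (Q * Sg) $$ (r,i)" by simp
  qed (use Tc Qc Sgc in simp_all)
  have Y1: "Y = V * (adj V * Y)" using uu1[OF Vu Y] by simp
  have "adj V * Y = adj T" unfolding T_def using Y V by (simp add: adj_mult carrier_matD)
  also have "\<dots> = adj Sg * adj Q" unfolding TQ using Qc Sgc by (simp add: adj_mult carrier_matD)
  also have "adj Sg = Sg" unfolding Sg_def by (rule dmat_adj)
  finally have "Y = V * (Sg * adj Q)" using Y1 by simp
  also have "\<dots> = S * (V * adj Q)"
    unfolding S Sg_def[symmetric] using V aV Sgc Qc Vu by (simp add: assoc_dim carrier_matD uu2')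
  finally have "Y = S * (V * adj Q)" .
  moreover have "unitary_mat n (V * adj Q)" using unitary_mult[OF Vu unitary_adj[OF Qu]] .
  ultimately show ?thesis by blast
qed


lemma sum_prod_idx: fixes a b :: nat
  shows "(\<Sum>p<a*b. f p) = (\<Sum>i<a. \<Sum>j<b. f (i*b+j))"
proof (induction a)
  case 0 thus ?case by simp
next
  case (Suc a)
  have "(\<Sum>p<Suc a*b. f p) = (\<Sum>p<a*b. f p) + (\<Sum>k<Suc a*b - a*b. f (k + a*b))"
    by (rule sum_split_at) simp
  also have "Suc a * b - a * b = b" by simp
  finally show ?case using Suc.IH by (simp add: add.commute)
qed

lemma idx_div: fixes i j d :: nat assumes "j < d" shows "(i*d+j) div d = i" "(i*d+j) mod d = j"
  using assms by simp_all

lemma sum_if_const: "(\<Sum>a\<in>A. if P then f a else 0) = (if P then (\<Sum>a\<in>A. f a) else 0)"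
  by (cases P) simp_all

lemma Et_carrier[simp]: "Et d i \<in> carrier_mat d d" unfolding Et_def by simp
lemma Et_dims[simp]: "dim_row (Et d i) = d" "dim_col (Et d i) = d" unfolding Et_def by simp_all

lemma Et_rho: assumes i: "i < d*d" and r: "\<rho> \<in> carrier_mat d d" and b: "b < d" and c: "c < d"
  shows "(Et d i * \<rho>) $$ (b,c) = (if b = i div d then \<rho> $$ (i mod d, c) else 0)"
proof -
  have im: "i mod d < d" using b by simp
  have "(Et d i * \<rho>) $$ (b,c) = (\<Sum>k\<in>{0..<d}. (if b = i div d \<and> k = i mod d then 1 else 0) * \<rho> $$ (k,c))"
    using r b c unfolding Et_def by (simp add: scalar_prod_def)
  also have "\<dots> = (\<Sum>k\<in>{0..<d}. if k = i mod d then (if b = i div d then \<rho> $$ (k,c) else 0) else 0)"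
    by (intro sum.cong) auto
  also have "\<dots> = (if b = i div d then \<rho> $$ (i mod d, c) else 0)" using im by simp
  finally show ?thesis .
qed

lemma Et_sandwich:
  assumes i: "i < d*d" and j: "j < d*d" and r: "\<rho> \<in> carrier_mat d d" and b: "b < d" and b': "b' < d"
  shows "(Et d i * \<rho> * adj (Et d j)) $$ (b,b') = (if b = i div d \<and> b' = j div d then \<rho> $$ (i mod d, j mod d) else 0)"
proof -
  have jm: "j mod d < d" using b by simp
  have "(Et d i * \<rho> * adj (Et d j)) $$ (b,b') = (\<Sum>c\<in>{0..<d}. (Et d i * \<rho>) $$ (b,c) * cnj (Et d j $$ (b',c)))"
    using r b b' by (simp add: scalar_prod_def)
  also have "\<dots> = (\<Sum>c\<in>{0..<d}. (if b = i div d then \<rho> $$ (i mod d, c) else 0) * (if b' = j div d \<and> c = j mod d then 1 else 0))"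
    using Et_rho[OF i r b] b' unfolding Et_def by (intro sum.cong) auto
  also have "\<dots> = (\<Sum>c\<in>{0..<d}. if c = j mod d then (if b = i div d \<and> b' = j div d then \<rho> $$ (i mod d, c) else 0) else 0)"
    by (intro sum.cong) auto
  also have "\<dots> = (if b = i div d \<and> b' = j div d then \<rho> $$ (i mod d, j mod d) else 0)" using jm by simp
  finally show ?thesis .
qed

lemma mtrace_sandwich:
  assumes j: "j < d*d" and k: "k < d*d" and r: "\<rho> \<in> carrier_mat d d"
  shows "mtrace (Et d j * \<rho> * adj (Et d k)) = (if j div d = k div d then \<rho> $$ (j mod d, k mod d) else 0)"
proof -
  have jd: "j div d < d" using j by (simp add: less_mult_imp_div_less)
  have "mtrace (Et d j * \<rho> * adj (Et d k)) = (\<Sum>r<d. (Et d j * \<rho> * adj (Et d k)) $$ (r,r))"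
    unfolding mtrace_def by simp
  also have "\<dots> = (\<Sum>r<d. if r = j div d then (if j div d = k div d then \<rho> $$ (j mod d, k mod d) else 0) else 0)"
    using Et_sandwich[OF j k r] by (intro sum.cong) auto
  also have "\<dots> = (if j div d = k div d then \<rho> $$ (j mod d, k mod d) else 0)" using jd by simp
  finally show ?thesis .
qed

lemma chi_channel_idx:
  assumes r: "\<rho> \<in> carrier_mat d d" and b: "b < d" and b': "b' < d"
  shows "chi_channel d \<chi> \<rho> $$ (b,b') = (\<Sum>a<d. \<Sum>a'<d. \<rho> $$ (a,a') * \<chi> $$ (b*d+a, b'*d+a'))"
proof -
  have "chi_channel d \<chi> \<rho> $$ (b,b') = (\<Sum>i<d*d. \<Sum>j<d*d. (Et d i * \<rho> * adj (Et d j)) $$ (b,b') * \<chi> $$ (i,j))"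
    unfolding chi_channel_def using b b' by (simp add: power2_eq_square)
  also have "\<dots> = (\<Sum>i<d*d. \<Sum>j<d*d. (if b = i div d \<and> b' = j div d then \<rho> $$ (i mod d, j mod d) * \<chi> $$ (i,j) else 0))"
    using Et_sandwich[OF _ _ r b b'] by (intro sum.cong refl) auto
  also have "\<dots> = (\<Sum>x<d. \<Sum>a<d. \<Sum>y<d. \<Sum>a'<d. (if b = x \<and> b' = y then \<rho> $$ (a, a') * \<chi> $$ (x*d+a, y*d+a') else 0))"
    unfolding sum_prod_idx by (intro sum.cong refl) (simp add: idx_div)
  also have "\<dots> = (\<Sum>x<d. \<Sum>a<d. if b = x then (\<Sum>a'<d. \<rho> $$ (a, a') * \<chi> $$ (x*d+a, b'*d+a')) else 0)"
  proof (intro sum.cong refl)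
    fix x a
    have "(\<Sum>y<d. \<Sum>a'<d. (if b = x \<and> b' = y then \<rho> $$ (a, a') * \<chi> $$ (x*d+a, y*d+a') else 0))
        = (\<Sum>y<d. if y = b' then (if b = x then (\<Sum>a'<d. \<rho> $$ (a, a') * \<chi> $$ (x*d+a, y*d+a')) else 0) else 0)"
      by (intro sum.cong refl) (auto simp: sum_if_const)
    also have "\<dots> = (if b = x then (\<Sum>a'<d. \<rho> $$ (a, a') * \<chi> $$ (x*d+a, b'*d+a')) else 0)"
      using b' by simp
    finally show "(\<Sum>y<d. \<Sum>a'<d. (if b = x \<and> b' = y then \<rho> $$ (a, a') * \<chi> $$ (x*d+a, y*d+a') else 0))
        = (if b = x then (\<Sum>a'<d. \<rho> $$ (a, a') * \<chi> $$ (x*d+a, b'*d+a')) else 0)" .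
  qed
  also have "\<dots> = (\<Sum>x<d. if x = b then (\<Sum>a<d. \<Sum>a'<d. \<rho> $$ (a, a') * \<chi> $$ (x*d+a, b'*d+a')) else 0)"
    by (intro sum.cong refl) (auto simp: sum_if_const)
  also have "\<dots> = (\<Sum>a<d. \<Sum>a'<d. \<rho> $$ (a,a') * \<chi> $$ (b*d+a, b'*d+a'))" using b by simp
  finally show ?thesis .
qed

definition eu :: "nat \<Rightarrow> nat \<Rightarrow> nat \<Rightarrow> complex mat" where
  "eu d a a' = mat d d (\<lambda>(r,c). if r = a \<and> c = a' then 1 else 0)"

lemma eu_carrier[simp]: "eu d a a' \<in> carrier_mat d d" unfolding eu_def by simp

lemma sum_eu: assumes "a < d" "a' < d"
  shows "(\<Sum>x<d. \<Sum>x'<d. eu d a a' $$ (x,x') * F x x') = F a a'"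
proof -
  have inner: "(\<Sum>x'<d. eu d a a' $$ (x,x') * F x x') = (if x = a then F x a' else 0)" if x: "x < d" for x
  proof -
    have "(\<Sum>x'<d. eu d a a' $$ (x,x') * F x x') = (\<Sum>x'<d. if x = a then (if x' = a' then F x x' else 0) else 0)"
      unfolding eu_def using x by (intro sum.cong refl) auto
    also have "\<dots> = (if x = a then F x a' else 0)" unfolding sum_if_const using assms by simp
    finally show ?thesis .
  qed
  have "(\<Sum>x<d. \<Sum>x'<d. eu d a a' $$ (x,x') * F x x') = (\<Sum>x<d. if x = a then F x a' else 0)"
    using inner by (intro sum.cong refl) simp
  also have "\<dots> = F a a'" using assms by simp
  finally show ?thesis .
qed

lemma chi_channel_eu: assumes "a < d" "a' < d" "b < d" "b' < d"
  shows "chi_channel d \<chi> (eu d a a') $$ (b,b') = \<chi> $$ (b*d+a, b'*d+a')"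
  using chi_channel_idx[OF eu_carrier assms(3,4)] sum_eu[OF assms(1,2)] by simp


lemma sum_sigma: fixes d :: nat
  shows "(\<Sum>r<d*d. g ((r mod d)*d + r div d)) = (\<Sum>r<d*d. g r)"
proof -
  have "(\<Sum>r<d*d. g ((r mod d)*d + r div d)) = (\<Sum>x<d. \<Sum>y<d. g (y*d + x))"
    unfolding sum_prod_idx by (intro sum.cong refl) (simp add: idx_div)
  also have "\<dots> = (\<Sum>y<d. \<Sum>x<d. g (y*d + x))" by (rule sum.swap)
  also have "\<dots> = (\<Sum>r<d*d. g r)" unfolding sum_prod_idx ..
  finally show ?thesis .
qed

lemma sigma_inv: fixes d i :: nat assumes "i < d*d"
  shows "((i mod d)*d + i div d) mod d = i div d" "((i mod d)*d + i div d) div d = i mod d"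
    "(((i mod d)*d + i div d) mod d) * d + ((i mod d)*d + i div d) div d = i"
    "(i mod d)*d + i div d < d*d"
proof -
  have d: "d > 0" using assms by (cases d) auto
  have id: "i div d < d" using assms by (simp add: less_mult_imp_div_less)
  have im: "i mod d < d" using d by simp
  show 1: "((i mod d)*d + i div d) mod d = i div d" using idx_div[OF id] by simp
  show 2: "((i mod d)*d + i div d) div d = i mod d" using idx_div[OF id] by simp
  show "(((i mod d)*d + i div d) mod d) * d + ((i mod d)*d + i div d) div d = i" unfolding 1 2 by simp
  have "(i mod d)*d + i div d < (i mod d)*d + d" using id by simp
  also have "\<dots> = (Suc (i mod d)) * d" by simp
  also have "\<dots> \<le> d * d" using im by (metis Suc_leI mult_le_mono1)
  finally show "(i mod d)*d + i div d < d*d" .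
qed

lemma idx_lt: fixes x i d :: nat assumes "x < d" "i < d" shows "x*d + i < d*d"
proof -
  have "x*d + i < x*d + d" using assms by simp
  also have "\<dots> = Suc x * d" by simp
  also have "\<dots> \<le> d * d" using assms by (metis Suc_leI mult_le_mono1)
  finally show ?thesis .
qed

lemma chi_psd:
  assumes chi: "\<chi> \<in> carrier_mat (d*d) (d*d)" and QC: "quantum_channel d d (chi_channel d \<chi>)"
  shows "psd (d*d) \<chi>"
proof -
  define \<Phi> where "\<Phi> = chi_channel d \<chi>"
  define X where "X = (mat (d*d) (d*d) (\<lambda>(p,q). if p div d = p mod d \<and> q div d = q mod d then 1 else 0) :: complex mat)"
  have Xc: "X \<in> carrier_mat (d*d) (d*d)" unfolding X_def by simp
  have XP: "psd (d*d) X"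
  proof (rule psdI[OF Xc])
    show "adj X = X" unfolding X_def by (rule eq_matI) auto
    fix v :: "complex vec" assume v: "v \<in> carrier_vec (d*d)"
    define s where "s = (\<Sum>q<d*d. if q div d = q mod d then v $ q else 0)"
    have Xv: "(X *\<^sub>v v) $ p = (if p div d = p mod d then s else 0)" if p: "p < d*d" for p
    proof -
      have "(X *\<^sub>v v) $ p = (\<Sum>q\<in>{0..<d*d}. (if p div d = p mod d \<and> q div d = q mod d then 1 else 0) * v $ q)"
        using p v unfolding X_def by (simp add: scalar_prod_def)
      also have "\<dots> = (\<Sum>q<d*d. if p div d = p mod d then (if q div d = q mod d then v $ q else 0) else 0)"
        unfolding atLeast0LessThan by (intro sum.cong refl) auto
      finally show ?thesis unfolding sum_if_const s_def .
    qed
    have "ipv v (X *\<^sub>v v) = (\<Sum>p<d*d. cnj (v $ p) * (if p div d = p mod d then s else 0))"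
      unfolding ipv_def using v Xv by (intro sum.cong) auto
    also have "\<dots> = (\<Sum>p<d*d. if p div d = p mod d then cnj (v $ p) else 0) * s"
      unfolding sum_distrib_right by (intro sum.cong refl) auto
    also have "(\<Sum>p<d*d. if p div d = p mod d then cnj (v $ p) else 0) = cnj s"
      unfolding s_def cnj_sum by (intro sum.cong refl) auto
    finally have "ipv v (X *\<^sub>v v) = cnj s * s" .
    thus "0 \<le> Re (ipv v (X *\<^sub>v v))" by (simp add: mult.commute complex_mult_cnj)
  qed
  have CP: "psd (d*d) (ampl d d d \<Phi> X)" using QC XP unfolding quantum_channel_def \<Phi>_def by blast
  define C where "C = ampl d d d \<Phi> X"
  have Cc: "C \<in> carrier_mat (d*d) (d*d)" using psdD(1)[OF CP] unfolding C_def .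
  have blk: "blk d X x y = eu d x y" if "x < d" "y < d" for x y
    unfolding blk_def eu_def X_def using that by (intro eq_matI) (auto simp: idx_div idx_lt)
  have Cidx: "C $$ (r,c) = \<chi> $$ ((r mod d)*d + r div d, (c mod d)*d + c div d)" if rc: "r < d*d" "c < d*d" for r c
  proof -
    have d: "d > 0" using rc by (cases d) auto
    have rd: "r div d < d" "c div d < d" using rc by (simp_all add: less_mult_imp_div_less)
    have "C $$ (r,c) = \<Phi> (eu d (r div d) (c div d)) $$ (r mod d, c mod d)"
      unfolding C_def ampl_def using rc blk[OF rd] by simp
    also have "\<dots> = \<chi> $$ ((r mod d)*d + r div d, (c mod d)*d + c div d)"
      unfolding \<Phi>_def by (rule chi_channel_eu) (use rd d in simp_all)
    finally show ?thesis .
  qed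
  have Ch: "adj C = C" using psdD(2)[OF CP] unfolding C_def .
  define \<sigma> where "\<sigma> = (\<lambda>i::nat. (i mod d)*d + i div d)"
  have sig: "\<sigma> i < d*d" "\<sigma> (\<sigma> i) = i" if "i < d*d" for i
    using sigma_inv[OF that] unfolding \<sigma>_def by simp_all
  have chiC: "\<chi> $$ (i,j) = C $$ (\<sigma> i, \<sigma> j)" if "i < d*d" "j < d*d" for i j
    using Cidx[OF sig(1)[OF that(1)] sig(1)[OF that(2)]] sig(2)[OF that(1)] sig(2)[OF that(2)]
    unfolding \<sigma>_def by simp
  show ?thesis
  proof (rule psdI[OF chi])
    show "adj \<chi> = \<chi>"
    proof (rule eq_matI)
      fix i j assume "i < dim_row \<chi>" "j < dim_col \<chi>"
      hence ij: "i < d*d" "j < d*d" using chi by auto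
      have "adj \<chi> $$ (i,j) = cnj (C $$ (\<sigma> j, \<sigma> i))" using chi ij chiC[OF ij(2) ij(1)] by simp
      also have "\<dots> = adj C $$ (\<sigma> i, \<sigma> j)" using Cc sig ij by simp
      also have "\<dots> = \<chi> $$ (i,j)" using Ch chiC[OF ij] by simp
      finally show "adj \<chi> $$ (i,j) = \<chi> $$ (i,j)" .
    qed (use chi in simp_all)
    fix v :: "complex vec" assume v: "v \<in> carrier_vec (d*d)"
    define v' where "v' = vec (d*d) (\<lambda>r. v $ \<sigma> r)"
    have v': "v' \<in> carrier_vec (d*d)" unfolding v'_def by simp
    have "ipv v' (C *\<^sub>v v') = (\<Sum>r<d*d. cnj (v $ \<sigma> r) * (\<Sum>c<d*d. C $$ (r,c) * v $ \<sigma> c))"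
      unfolding ipv_def v'_def using Cc by (simp add: scalar_prod_def atLeast0LessThan)
    also have "\<dots> = (\<Sum>r<d*d. cnj (v $ \<sigma> r) * (\<Sum>c<d*d. \<chi> $$ (\<sigma> r, \<sigma> c) * v $ \<sigma> c))"
      by (intro sum.cong refl) (simp add: chiC sig)
    also have "\<dots> = (\<Sum>r<d*d. cnj (v $ \<sigma> r) * (\<Sum>c<d*d. \<chi> $$ (\<sigma> r, c) * v $ c))"
    proof (rule sum.cong[OF refl])
      fix r
      have "(\<Sum>c<d*d. \<chi> $$ (\<sigma> r, \<sigma> c) * v $ \<sigma> c) = (\<Sum>c<d*d. \<chi> $$ (\<sigma> r, c) * v $ c)"
        using sum_sigma[of "\<lambda>c. \<chi> $$ (\<sigma> r, c) * v $ c" d] unfolding \<sigma>_def by simp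
      thus "cnj (v $ \<sigma> r) * (\<Sum>c<d*d. \<chi> $$ (\<sigma> r, \<sigma> c) * v $ \<sigma> c) = cnj (v $ \<sigma> r) * (\<Sum>c<d*d. \<chi> $$ (\<sigma> r, c) * v $ c)"
        by simp
    qed
    also have "\<dots> = (\<Sum>r<d*d. cnj (v $ r) * (\<Sum>c<d*d. \<chi> $$ (r, c) * v $ c))"
      using sum_sigma[of "\<lambda>r. cnj (v $ r) * (\<Sum>c<d*d. \<chi> $$ (r, c) * v $ c)" d] unfolding \<sigma>_def by simp
    also have "\<dots> = ipv v (\<chi> *\<^sub>v v)"
      unfolding ipv_def using v chi by (simp add: scalar_prod_def atLeast0LessThan)
    finally show "0 \<le> Re (ipv v (\<chi> *\<^sub>v v))" using psdD(3)[OF CP v'] unfolding C_def by simp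
  qed
qed

lemma trace_cond:
  assumes QC: "quantum_channel d d (chi_channel d \<chi>)" and a: "a < d" "a' < d"
  shows "(\<Sum>b<d. \<chi> $$ (b*d+a', b*d+a)) = (if a' = a then 1 else 0)"
proof -
  have "mtrace (chi_channel d \<chi> (eu d a' a)) = mtrace (eu d a' a)"
    using QC unfolding quantum_channel_def by simp
  moreover have "mtrace (chi_channel d \<chi> (eu d a' a)) = (\<Sum>b<d. \<chi> $$ (b*d+a', b*d+a))"
    unfolding mtrace_def using chi_channel_eu[OF a(2) a(1)] by (simp add: chi_channel_def)
  moreover have "mtrace (eu d a' a) = (\<Sum>b<d. if b = a' then (if a' = a then 1 else 0) else 0)"
    unfolding mtrace_def eu_def by (intro sum.cong) auto
  ultimately show ?thesis using a by simp
qed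


lemma idx_lt2: fixes x i a N :: nat assumes "x < a" "i < N" shows "x*N + i < a*N"
proof -
  have "x*N + i < x*N + N" using assms by simp
  also have "\<dots> = Suc x * N" by simp
  also have "\<dots> \<le> a * N" using assms by (metis Suc_leI mult_le_mono1)
  finally show ?thesis .
qed

lemma sandwich_idx:
  assumes U: "U \<in> carrier_mat m k" and r: "\<rho> \<in> carrier_mat k k" and p: "p < m" and q: "q < m"
  shows "(U * \<rho> * adj U) $$ (p,q) = (\<Sum>a<k. \<Sum>a'<k. U $$ (p,a) * \<rho> $$ (a,a') * cnj (U $$ (q,a')))"
proof -
  have "(U * \<rho> * adj U) $$ (p,q) = (\<Sum>a'<k. (\<Sum>a<k. U $$ (p,a) * \<rho> $$ (a,a')) * cnj (U $$ (q,a')))"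
    using U r p q by (simp add: scalar_prod_def atLeast0LessThan)
  also have "\<dots> = (\<Sum>a'<k. \<Sum>a<k. U $$ (p,a) * \<rho> $$ (a,a') * cnj (U $$ (q,a')))"
    by (simp add: sum_distrib_right)
  also have "\<dots> = (\<Sum>a<k. \<Sum>a'<k. U $$ (p,a) * \<rho> $$ (a,a') * cnj (U $$ (q,a')))"
    by (rule sum.swap)
  finally show ?thesis .
qed

lemma herm_cnj: assumes "adj S = S" "S \<in> carrier_mat n n" "i < n" "j < n"
  shows "cnj (S $$ (i,j)) = S $$ (j,i)"
proof -
  have "S $$ (j,i) = adj S $$ (j,i)" using assms(1) by simp
  also have "\<dots> = cnj (S $$ (i,j))" using assms(2-4) by simp
  finally show ?thesis by simp
qed

definition U0 :: "nat \<Rightarrow> complex mat \<Rightarrow> complex mat" where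
  "U0 d S = mat (d*(d*d)) d (\<lambda>(p,a). S $$ ((p div (d*d))*d + a, p mod (d*d)))"

lemma U0_iso:
  assumes P: "psd (d*d) S" and SS: "S * S = \<chi>" and QC: "quantum_channel d d (chi_channel d \<chi>)"
  shows "isometric_extension d d (d*d) (chi_channel d \<chi>) (U0 d S)"
proof -
  define N where "N = d*d"
  have S: "S \<in> carrier_mat N N" and Sh: "adj S = S" using psdD[OF P] unfolding N_def by auto
  have Uc: "U0 d S \<in> carrier_mat (d*N) d" unfolding U0_def N_def by simp
  have Uidx: "U0 d S $$ (b*N+e, a) = S $$ (b*d+a, e)" if "b < d" "e < N" "a < d" for b e a
    using that idx_lt2[OF that(1,2)] unfolding U0_def N_def[symmetric] by simp
  have chi_idx: "\<chi> $$ (x,y) = (\<Sum>e<N. S $$ (x,e) * cnj (S $$ (y,e)))" if "x < N" "y < N" for x y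
  proof -
    have "\<chi> $$ (x,y) = (\<Sum>e<N. S $$ (x,e) * S $$ (e,y))"
      unfolding SS[symmetric] using S that by (simp add: scalar_prod_def atLeast0LessThan)
    also have "\<dots> = (\<Sum>e<N. S $$ (x,e) * cnj (S $$ (y,e)))"
      using herm_cnj[OF Sh S] that by (intro sum.cong refl) simp
    finally show ?thesis .
  qed
  have iso: "adj (U0 d S) * U0 d S = 1\<^sub>m d"
  proof (rule eq_matI)
    fix a a' assume "a < dim_row (1\<^sub>m d :: complex mat)" "a' < dim_col (1\<^sub>m d :: complex mat)"
    hence aa: "a < d" "a' < d" by auto
    have "(adj (U0 d S) * U0 d S) $$ (a,a') = (\<Sum>p<d*N. cnj (U0 d S $$ (p,a)) * U0 d S $$ (p,a'))"
      using Uc aa by (simp add: scalar_prod_def atLeast0LessThan)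
    also have "\<dots> = (\<Sum>b<d. \<Sum>e<N. cnj (S $$ (b*d+a, e)) * S $$ (b*d+a', e))"
      unfolding sum_prod_idx using Uidx aa by (intro sum.cong refl) simp
    also have "\<dots> = (\<Sum>b<d. \<chi> $$ (b*d+a', b*d+a))"
      using chi_idx idx_lt[OF _ aa(1)] idx_lt[OF _ aa(2)] unfolding N_def
      by (intro sum.cong refl) (simp add: mult.commute)
    also have "\<dots> = (if a' = a then 1 else 0)" using trace_cond[OF QC aa(1) aa(2)] .
    finally show "(adj (U0 d S) * U0 d S) $$ (a,a') = 1\<^sub>m d $$ (a,a')" using aa by auto
  qed (use Uc in simp_all)
  have chan: "chi_channel d \<chi> \<rho> = ptrace_env d N (U0 d S * \<rho> * adj (U0 d S))" if r: "\<rho> \<in> carrier_mat d d" for \<rho>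
  proof (rule eq_matI)
    fix b b' assume "b < dim_row (ptrace_env d N (U0 d S * \<rho> * adj (U0 d S)))"
      "b' < dim_col (ptrace_env d N (U0 d S * \<rho> * adj (U0 d S)))"
    hence bb: "b < d" "b' < d" unfolding ptrace_env_def by auto
    have "ptrace_env d N (U0 d S * \<rho> * adj (U0 d S)) $$ (b,b')
        = (\<Sum>e<N. (U0 d S * \<rho> * adj (U0 d S)) $$ (b*N+e, b'*N+e))"
      unfolding ptrace_env_def using bb by simp
    also have "\<dots> = (\<Sum>e<N. \<Sum>a<d. \<Sum>a'<d. S $$ (b*d+a, e) * \<rho> $$ (a,a') * cnj (S $$ (b'*d+a', e)))"
      using sandwich_idx[OF Uc r] idx_lt2[OF bb(1)] idx_lt2[OF bb(2)] Uidx bb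
      by (intro sum.cong refl) simp
    also have "\<dots> = (\<Sum>a<d. \<Sum>a'<d. \<Sum>e<N. S $$ (b*d+a, e) * \<rho> $$ (a,a') * cnj (S $$ (b'*d+a', e)))"
      by (simp add: sum.swap[of _ "{..<N}"] sum.swap[of _ "{..<N}" "{..<d}"])
    also have "\<dots> = (\<Sum>a<d. \<Sum>a'<d. \<rho> $$ (a,a') * \<chi> $$ (b*d+a, b'*d+a'))"
      using chi_idx idx_lt[OF bb(1)] idx_lt[OF bb(2)] unfolding N_def
      by (intro sum.cong refl) (simp add: sum_distrib_left mult.commute mult.left_commute)
    also have "\<dots> = chi_channel d \<chi> \<rho> $$ (b,b')" using chi_channel_idx[OF r bb] by simp
    finally show "chi_channel d \<chi> \<rho> $$ (b,b') = ptrace_env d N (U0 d S * \<rho> * adj (U0 d S)) $$ (b,b')" by simp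
  qed (simp_all add: ptrace_env_def chi_channel_def)
  show ?thesis unfolding isometric_extension_def N_def[symmetric] using Uc iso chan by blast
qed


definition Gm :: "nat \<Rightarrow> complex mat \<Rightarrow> complex mat" where
  "Gm d U = mat (d*d) (d*d) (\<lambda>(p,e). U $$ ((p div d)*(d*d) + e, p mod d))"

lemma Gm_carrier[simp]: "Gm d U \<in> carrier_mat (d*d) (d*d)" unfolding Gm_def by simp

lemma Gm_idx: assumes "b < d" "a < d" "e < d*d" shows "Gm d U $$ (b*d+a, e) = U $$ (b*(d*d)+e, a)"
  using assms idx_lt[OF assms(1,2)] unfolding Gm_def by (simp add: idx_div)

lemma rho_tilde_idx: assumes r: "\<rho> \<in> carrier_mat d d" and "x < d" "a < d" "y < d" "a' < d"
  shows "rho_tilde d \<rho> $$ (x*d+a, y*d+a') = (if x = y then \<rho> $$ (a,a') else 0)"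
  using assms idx_lt[OF assms(2,3)] idx_lt[OF assms(4,5)] mtrace_sandwich[OF idx_lt[OF assms(2,3)] idx_lt[OF assms(4,5)] r]
  unfolding rho_tilde_def by (simp add: idx_div power2_eq_square)

lemma ptrace_out_G:
  assumes U: "U \<in> carrier_mat (d*(d*d)) d" and r: "\<rho> \<in> carrier_mat d d"
  shows "ptrace_out d (d*d) (U * \<rho> * adj U) = transpose_mat (Gm d U) * rho_tilde d \<rho> * conj_mat (Gm d U)"
proof (rule eq_matI)
  define N where "N = d*d"
  define G where "G = Gm d U"
  define R where "R = rho_tilde d \<rho>"
  have Gc: "G \<in> carrier_mat N N" unfolding G_def N_def by simp
  have Rc: "R \<in> carrier_mat N N" unfolding R_def N_def rho_tilde_def by (simp add: power2_eq_square)
  fix e f assume "e < dim_row (transpose_mat (Gm d U) * rho_tilde d \<rho> * conj_mat (Gm d U))"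
    "f < dim_col (transpose_mat (Gm d U) * rho_tilde d \<rho> * conj_mat (Gm d U))"
  hence ef: "e < N" "f < N" unfolding N_def conj_mat_def Gm_def by simp_all
  have "(transpose_mat G * R * conj_mat G) $$ (e,f) = (\<Sum>q<N. (\<Sum>p<N. G $$ (p,e) * R $$ (p,q)) * cnj (G $$ (q,f)))"
  proof -
    have "(transpose_mat G * R * conj_mat G) $$ (e,f) = (\<Sum>i<N. G $$ (i, e) * (\<Sum>j<N. R $$ (i, j) * cnj (G $$ (j, f))))"
      using Gc Rc ef unfolding conj_mat_def by (simp add: scalar_prod_def atLeast0LessThan)
    also have "\<dots> = (\<Sum>i<N. \<Sum>j<N. G $$ (i, e) * R $$ (i, j) * cnj (G $$ (j, f)))"
      by (simp add: sum_distrib_left mult.assoc)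
    also have "\<dots> = (\<Sum>j<N. \<Sum>i<N. G $$ (i, e) * R $$ (i, j) * cnj (G $$ (j, f)))"
      by (rule sum.swap)
    also have "\<dots> = (\<Sum>q<N. (\<Sum>p<N. G $$ (p,e) * R $$ (p,q)) * cnj (G $$ (q,f)))"
      by (simp add: sum_distrib_right)
    finally show ?thesis .
  qed
  also have "\<dots> = (\<Sum>y<d. \<Sum>a'<d. (\<Sum>x<d. \<Sum>a<d. G $$ (x*d+a,e) * R $$ (x*d+a,y*d+a')) * cnj (G $$ (y*d+a',f)))"
    unfolding N_def sum_prod_idx ..
  also have "\<dots> = (\<Sum>y<d. \<Sum>a'<d. (\<Sum>a<d. U $$ (y*N+e,a) * \<rho> $$ (a,a')) * cnj (U $$ (y*N+f,a')))"
  proof (intro sum.cong refl)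
    fix y a' assume y: "y \<in> {..<d}" and a': "a' \<in> {..<d}"
    have "(\<Sum>x<d. \<Sum>a<d. G $$ (x*d+a,e) * R $$ (x*d+a,y*d+a'))
        = (\<Sum>x<d. if x = y then (\<Sum>a<d. G $$ (x*d+a,e) * \<rho> $$ (a,a')) else 0)"
      using y a' rho_tilde_idx[OF r] unfolding R_def by (intro sum.cong refl) (auto simp: sum_if_const)
    also have "\<dots> = (\<Sum>a<d. G $$ (y*d+a,e) * \<rho> $$ (a,a'))" using y by simp
    also have "\<dots> = (\<Sum>a<d. U $$ (y*N+e,a) * \<rho> $$ (a,a'))"
      using y ef Gm_idx unfolding G_def N_def by (intro sum.cong refl) simp
    finally show "(\<Sum>x<d. \<Sum>a<d. G $$ (x*d+a,e) * R $$ (x*d+a,y*d+a')) * cnj (G $$ (y*d+a',f))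
        = (\<Sum>a<d. U $$ (y*N+e,a) * \<rho> $$ (a,a')) * cnj (U $$ (y*N+f,a'))"
      using y a' ef Gm_idx unfolding G_def N_def by simp
  qed
  also have "\<dots> = (\<Sum>y<d. \<Sum>a<d. \<Sum>a'<d. U $$ (y*N+e,a) * \<rho> $$ (a,a') * cnj (U $$ (y*N+f,a')))"
  proof (rule sum.cong[OF refl])
    fix y
    have "(\<Sum>a'<d. (\<Sum>a<d. U $$ (y*N+e,a) * \<rho> $$ (a,a')) * cnj (U $$ (y*N+f,a')))
        = (\<Sum>a'<d. \<Sum>a<d. U $$ (y*N+e,a) * \<rho> $$ (a,a') * cnj (U $$ (y*N+f,a')))"
      by (simp add: sum_distrib_right)
    also have "\<dots> = (\<Sum>a<d. \<Sum>a'<d. U $$ (y*N+e,a) * \<rho> $$ (a,a') * cnj (U $$ (y*N+f,a')))"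
      by (rule sum.swap)
    finally show "(\<Sum>a'<d. (\<Sum>a<d. U $$ (y*N+e,a) * \<rho> $$ (a,a')) * cnj (U $$ (y*N+f,a')))
        = (\<Sum>a<d. \<Sum>a'<d. U $$ (y*N+e,a) * \<rho> $$ (a,a') * cnj (U $$ (y*N+f,a')))" .
  qed
  also have "\<dots> = (\<Sum>y<d. (U * \<rho> * adj U) $$ (y*N+e, y*N+f))"
    using sandwich_idx[OF U r] idx_lt2[of _ d e N] idx_lt2[of _ d f N] ef unfolding N_def
    by (intro sum.cong refl) simp
  also have "\<dots> = ptrace_out d N (U * \<rho> * adj U) $$ (e,f)"
    unfolding ptrace_out_def using ef by simp
  finally show "ptrace_out d (d*d) (U * \<rho> * adj U) $$ (e,f) = (transpose_mat (Gm d U) * rho_tilde d \<rho> * conj_mat (Gm d U)) $$ (e,f)"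
    unfolding G_def R_def N_def by simp
qed (simp_all add: ptrace_out_def conj_mat_def Gm_def)


lemma conj_mat_mult: "dim_col A = dim_row B \<Longrightarrow> conj_mat (A * B) = conj_mat A * conj_mat B"
  unfolding conj_mat_def by (rule eq_matI) (simp_all add: scalar_prod_def)

lemma conj_mat_dims[simp]: "dim_row (conj_mat A) = dim_row A" "dim_col (conj_mat A) = dim_col A"
  unfolding conj_mat_def by simp_all

lemma transpose_herm: assumes "S \<in> carrier_mat n n" "adj S = S" shows "transpose_mat S = conj_mat S"
proof (rule eq_matI)
  fix i j assume "i < dim_row (conj_mat S)" "j < dim_col (conj_mat S)"
  hence ij: "i < n" "j < n" using assms by auto
  show "transpose_mat S $$ (i,j) = conj_mat S $$ (i,j)"
    using herm_cnj[OF assms(2) assms(1) ij] assms ij unfolding conj_mat_def by simp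
qed (use assms in simp_all)

lemma transpose_unitary: assumes Zu: "unitary_mat n Z"
  shows "unitary_mat n (transpose_mat Z)" "adj (transpose_mat Z) = conj_mat Z"
proof -
  have Z: "Z \<in> carrier_mat n n" using Zu unfolding unitary_mat_def by auto
  show a: "adj (transpose_mat Z) = conj_mat Z"
    unfolding conj_mat_def by (rule eq_matI) (use Z in simp_all)
  have "adj (transpose_mat Z) * transpose_mat Z = 1\<^sub>m n"
  proof (rule eq_matI)
    fix i j assume "i < dim_row (1\<^sub>m n :: complex mat)" "j < dim_col (1\<^sub>m n :: complex mat)"
    hence ij: "i < n" "j < n" by auto
    have "(adj (transpose_mat Z) * transpose_mat Z) $$ (i,j) = (\<Sum>k<n. cnj (Z $$ (i,k)) * Z $$ (j,k))"
      using Z ij by (simp add: scalar_prod_def atLeast0LessThan)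
    also have "\<dots> = (Z * adj Z) $$ (j,i)"
      using Z ij by (simp add: scalar_prod_def atLeast0LessThan mult.commute)
    also have "\<dots> = 1\<^sub>m n $$ (i,j)" using unitary_right[OF Zu] ij by auto
    finally show "(adj (transpose_mat Z) * transpose_mat Z) $$ (i,j) = 1\<^sub>m n $$ (i,j)" .
  qed (use Z in simp_all)
  thus "unitary_mat n (transpose_mat Z)" unfolding unitary_mat_def using Z by simp
qed

lemma GG:
  assumes iso: "isometric_extension d d (d*d) (chi_channel d \<chi>) U" and chi: "\<chi> \<in> carrier_mat (d*d) (d*d)"
  shows "Gm d U * adj (Gm d U) = \<chi>"
proof (rule eq_matI)
  define N where "N = d*d"
  have U: "U \<in> carrier_mat (d*N) d" and ch: "\<And>\<rho>. \<rho> \<in> carrier_mat d d \<Longrightarrow> chi_channel d \<chi> \<rho> = ptrace_env d N (U * \<rho> * adj U)"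
    using iso unfolding isometric_extension_def N_def by auto
  fix p q assume "p < dim_row \<chi>" "q < dim_col \<chi>"
  hence pq: "p < N" "q < N" using chi unfolding N_def by auto
  have d: "d > 0" using pq unfolding N_def by (cases d) auto
  define b a b' a' where "b = p div d" "a = p mod d" "b' = q div d" "a' = q mod d"
  have ba: "b < d" "a < d" "b' < d" "a' < d" using pq d unfolding b_a_b'_a'_def N_def
    by (simp_all add: less_mult_imp_div_less)
  have p: "p = b*d+a" and q: "q = b'*d+a'" unfolding b_a_b'_a'_def by simp_all
  have "(Gm d U * adj (Gm d U)) $$ (p,q) = (\<Sum>e<N. Gm d U $$ (p,e) * cnj (Gm d U $$ (q,e)))"
    using pq unfolding N_def by (simp add: scalar_prod_def atLeast0LessThan Gm_def)
  also have "\<dots> = (\<Sum>e<N. U $$ (b*N+e, a) * cnj (U $$ (b'*N+e, a')))"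
    unfolding p q using Gm_idx ba unfolding N_def by (intro sum.cong refl) simp
  also have "\<dots> = (\<Sum>e<N. (U * eu d a a' * adj U) $$ (b*N+e, b'*N+e))"
  proof (rule sum.cong[OF refl])
    fix e assume e: "e \<in> {..<N}"
    have lt: "b*N+e < d*N" "b'*N+e < d*N" using idx_lt2 ba e by auto
    have "(U * eu d a a' * adj U) $$ (b*N+e, b'*N+e)
        = (\<Sum>x<d. \<Sum>x'<d. U $$ (b*N+e,x) * eu d a a' $$ (x,x') * cnj (U $$ (b'*N+e,x')))"
      by (rule sandwich_idx[OF U eu_carrier lt])
    also have "\<dots> = (\<Sum>x<d. \<Sum>x'<d. eu d a a' $$ (x,x') * (U $$ (b*N+e,x) * cnj (U $$ (b'*N+e,x'))))"
      by (simp add: mult.commute mult.left_commute)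
    also have "\<dots> = U $$ (b*N+e, a) * cnj (U $$ (b'*N+e, a'))"
      by (rule sum_eu[OF ba(2) ba(4)])
    finally show "U $$ (b*N+e, a) * cnj (U $$ (b'*N+e, a')) = (U * eu d a a' * adj U) $$ (b*N+e, b'*N+e)" by simp
  qed
  also have "\<dots> = ptrace_env d N (U * eu d a a' * adj U) $$ (b,b')"
    unfolding ptrace_env_def using ba by simp
  also have "\<dots> = chi_channel d \<chi> (eu d a a') $$ (b,b')" using ch[OF eu_carrier] by simp
  also have "\<dots> = \<chi> $$ (p,q)" unfolding p q by (rule chi_channel_eu[OF ba(2) ba(4) ba(1) ba(3)])
  finally show "(Gm d U * adj (Gm d U)) $$ (p,q) = \<chi> $$ (p,q)" .
qed (use chi in \<open>simp_all add: Gm_def\<close>)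


lemma rho_tilde_dims[simp]: "dim_row (rho_tilde d \<rho>) = d*d" "dim_col (rho_tilde d \<rho>) = d*d"
  unfolding rho_tilde_def by (simp_all add: power2_eq_square)

theorem lemma20:
  fixes d :: nat and \<chi> :: "complex mat"
  assumes "\<chi> \<in> carrier_mat (d^2) (d^2)"
    and "quantum_channel d d (chi_channel d \<chi>)"
  shows "(\<exists>U. isometric_extension d d (d^2) (chi_channel d \<chi>) U) \<and>
         (\<forall>U. isometric_extension d d (d^2) (chi_channel d \<chi>) U \<longrightarrow>
            (\<exists>W. unitary_mat (d^2) W \<and>
               (\<forall>\<rho> \<in> carrier_mat d d.
                  ptrace_out d (d^2) (U * \<rho> * adj U) =
                  W * (conj_mat (psd_sqrt (d^2) \<chi>) * rho_tilde d \<rho> * conj_mat (psd_sqrt (d^2) \<chi>)) * adj W)))"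
proof -
  have chi: "\<chi> \<in> carrier_mat (d*d) (d*d)" using assms(1) by (simp add: power2_eq_square)
  note QC = assms(2)
  have P: "psd (d*d) \<chi>" by (rule chi_psd[OF chi QC])
  define S where "S = psd_sqrt (d*d) \<chi>"
  have PS: "psd (d*d) S" and SS: "S * S = \<chi>" unfolding S_def using psd_sqrt_props[OF P] by auto
  have Sc: "S \<in> carrier_mat (d*d) (d*d)" and Sh: "adj S = S" using psdD[OF PS] by auto
  have ex: "\<exists>U. isometric_extension d d (d*d) (chi_channel d \<chi>) U"
    using U0_iso[OF PS SS QC] by blast
  have all: "\<forall>U. isometric_extension d d (d*d) (chi_channel d \<chi>) U \<longrightarrow>
            (\<exists>W. unitary_mat (d*d) W \<and>
               (\<forall>\<rho> \<in> carrier_mat d d.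
                  ptrace_out d (d*d) (U * \<rho> * adj U) =
                  W * (conj_mat S * rho_tilde d \<rho> * conj_mat S) * adj W))"
  proof (intro allI impI)
    fix U assume iso: "isometric_extension d d (d*d) (chi_channel d \<chi>) U"
    have Uc: "U \<in> carrier_mat (d*(d*d)) d" using iso unfolding isometric_extension_def by auto
    define G where "G = Gm d U"
    have Gc: "G \<in> carrier_mat (d*d) (d*d)" unfolding G_def by simp
    have "G * adj G = S * S" unfolding G_def SS by (rule GG[OF iso chi])
    then obtain Z where Zu: "unitary_mat (d*d) Z" and GZ: "G = S * Z" using freedom[OF PS Gc] by blast
    have Zc: "Z \<in> carrier_mat (d*d) (d*d)" using Zu unfolding unitary_mat_def by auto
    define W where "W = transpose_mat Z"
    have Wu: "unitary_mat (d*d) W" and aW: "adj W = conj_mat Z" unfolding W_def using transpose_unitary[OF Zu] by auto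
    have tG: "transpose_mat G = W * conj_mat S"
      unfolding GZ W_def using transpose_mult[OF Sc Zc] transpose_herm[OF Sc Sh] by simp
    have cG: "conj_mat G = conj_mat S * conj_mat Z"
      unfolding GZ using Sc Zc by (simp add: conj_mat_mult carrier_matD)
    have Wc: "W \<in> carrier_mat (d*d) (d*d)" unfolding W_def using Zc by simp
    have "\<forall>\<rho> \<in> carrier_mat d d. ptrace_out d (d*d) (U * \<rho> * adj U) = W * (conj_mat S * rho_tilde d \<rho> * conj_mat S) * adj W"
    proof
      fix \<rho> :: "complex mat" assume r: "\<rho> \<in> carrier_mat d d"
      have "ptrace_out d (d*d) (U * \<rho> * adj U) = transpose_mat G * rho_tilde d \<rho> * conj_mat G"
        unfolding G_def by (rule ptrace_out_G[OF Uc r])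
      also have "\<dots> = W * conj_mat S * rho_tilde d \<rho> * (conj_mat S * conj_mat Z)" unfolding tG cG ..
      also have "\<dots> = W * (conj_mat S * rho_tilde d \<rho> * conj_mat S) * adj W"
        unfolding aW using Wc Sc Zc by (simp add: assoc_dim carrier_matD)
      finally show "ptrace_out d (d*d) (U * \<rho> * adj U) = W * (conj_mat S * rho_tilde d \<rho> * conj_mat S) * adj W" .
    qed
    thus "\<exists>W. unitary_mat (d*d) W \<and> (\<forall>\<rho> \<in> carrier_mat d d. ptrace_out d (d*d) (U * \<rho> * adj U) =
                  W * (conj_mat S * rho_tilde d \<rho> * conj_mat S) * adj W)" using Wu by blast
  qed
  show ?thesis unfolding power2_eq_square using ex all unfolding S_def by blast
qed


end
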